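(* Let $X$ be a finite dimensional real or complex Banach space and let $\eta$ be an admissible probability measure on $S_{X^*}$. Then there is a point $x_0\in S_X$, depending on $\eta$, such that $$\mathbf c(X)\ge \exp\left\{-\int_{S_{X^*}}\log|\langle x_0,\psi\rangle|\,d\eta(\psi)\right\}.$$
   Context: For a Banach space $Y$, $B_Y$ and $S_Y$ denote its closed unit ball and unit sphere. For a Banach space $X$ over $\mathbb K\in\{\mathbb R,\mathbb C\}$ and $n\in\mathbb N$, $\mathbf c_n(X)$ is the smallest constant such that for all $\psi_1,\dots,\psi_n\in X^*$, $\|\psi_1\|\cdots\|\psi_n\|\le \mathbf c_n(X)\,\|\psi_1\cdots\psi_n\|$, where $\psi_1\cdots\psi_n$ is the pointwise product and $\|P\|=\sup_{x\in S_X}|P(x)|$; $\mathbf c(X)=\lim_{n\to\infty}\mathbf c_n(X)^{1/n}$ (this limit exists). Admissibility: for a Banach space $Y$, a Borel set $K\subseteq B_Y$ and a Borel measure $\lambda$ on $K$, $\lambda$ is admissible if $\int_K\log|\langle y,\varphi\rangle|\,d\lambda(y)$ is finite for every $\varphi\in S_{Y^*}$ and $g_m(\varphi)=\int_K\max\{\log|\langle y,\varphi\rangle|,-m\}\,d\lambda(y)$ converges uniformly on $S_{Y^*}$ as $m\to\infty$ to $g(\varphi)=\int_K\log|\langle y,\varphi\rangle|\,d\lambda(y)$. Here it is applied with $Y=X^*$, $K=S_{X^*}$, $Y^*=X$. *)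

theory Defs
  imports "HOL-Probability.Probability"
begin

text \<open>The n-dimensional Banach space X over K (K = real or complex) is modelled as
  K^n (type 'k^'n) equipped with an arbitrary norm N. Its dual X* is identified with
  K^n via the pairing below (every K-linear functional on K^n is of this form).\<close>

definition pair :: "'k::real_normed_field^'n \<Rightarrow> 'k^'n \<Rightarrow> 'k" where
  "pair x \<psi> = (\<Sum>i\<in>UNIV. x $ i * \<psi> $ i)"

definition is_norm :: "('k::real_normed_field^'n \<Rightarrow> real) \<Rightarrow> bool" where
  "is_norm N \<longleftrightarrow> (\<forall>x. N x = 0 \<longleftrightarrow> x = 0) \<and> (\<forall>c x. N (c *s x) = norm c * N x)
     \<and> (\<forall>x y. N (x + y) \<le> N x + N y)"

definition sphere_N :: "('k::real_normed_field^'n \<Rightarrow> real) \<Rightarrow> ('k^'n) set" where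
  "sphere_N N = {x. N x = 1}"

definition dual_norm :: "('k::real_normed_field^'n \<Rightarrow> real) \<Rightarrow> 'k^'n \<Rightarrow> real" where
  "dual_norm N \<psi> = (SUP x\<in>sphere_N N. norm (pair x \<psi>))"

definition dual_sphere :: "('k::real_normed_field^'n \<Rightarrow> real) \<Rightarrow> ('k^'n) set" where
  "dual_sphere N = {\<psi>. dual_norm N \<psi> = 1}"

definition prod_norm :: "('k::real_normed_field^'n \<Rightarrow> real) \<Rightarrow> nat \<Rightarrow> (nat \<Rightarrow> 'k^'n) \<Rightarrow> real" where
  "prod_norm N n \<psi> = (SUP x\<in>sphere_N N. norm (\<Prod>i<n. pair x (\<psi> i)))"

definition c_n :: "('k::real_normed_field^'n \<Rightarrow> real) \<Rightarrow> nat \<Rightarrow> real" where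
  "c_n N n = Inf {C. \<forall>\<psi>::nat \<Rightarrow> 'k^'n. (\<Prod>i<n. dual_norm N (\<psi> i)) \<le> C * prod_norm N n \<psi>}"

definition c_X :: "('k::real_normed_field^'n \<Rightarrow> real) \<Rightarrow> real" where
  "c_X N = lim (\<lambda>n. root n (c_n N n))"

text \<open>Admissibility (with Y = X*, K = S_{X*}, Y* = X). Finiteness of the integral of
  log|<x,psi>| (log 0 = -infinity) is expressed as: the pairing is a.e. nonzero and
  the (real-valued) function is integrable.\<close>
definition admissible :: "('k::real_normed_field^'n \<Rightarrow> real) \<Rightarrow> ('k^'n) measure \<Rightarrow> bool" where
  "admissible N \<eta> \<longleftrightarrow>
     (\<forall>x\<in>sphere_N N. (AE \<psi> in \<eta>. pair x \<psi> \<noteq> 0) \<and> integrable \<eta> (\<lambda>\<psi>. ln (norm (pair x \<psi>))))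
   \<and> uniform_limit (sphere_N N)
       (\<lambda>m x. \<integral>\<psi>. max (ln (norm (pair x \<psi>))) (- real m) \<partial>\<eta>)
       (\<lambda>x. \<integral>\<psi>. ln (norm (pair x \<psi>)) \<partial>\<eta>) sequentially"

definition prob_on_dual_sphere :: "('k::real_normed_field^'n \<Rightarrow> real) \<Rightarrow> ('k^'n) measure \<Rightarrow> bool" where
  "prob_on_dual_sphere N \<eta> \<longleftrightarrow> prob_space \<eta> \<and> space \<eta> = dual_sphere N
     \<and> sets \<eta> = sets (restrict_space borel (dual_sphere N))"

end

theory Submission
  imports Defs "HOL-Computational_Algebra.Polynomial"
begin


lemma pair_scale: "pair (c *s x) \<psi> = c * pair x \<psi>"
  by (simp add: pair_def sum_distrib_left mult.assoc)
lemma pair_add: "pair (x + y) \<psi> = pair x \<psi> + pair y \<psi>"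
  by (simp add: pair_def distrib_right sum.distrib)
lemma pair_diff: "pair (x - y) \<psi> = pair x \<psi> - pair y \<psi>"
  by (simp add: pair_def left_diff_distrib sum_subtractf)
lemma pair_zero[simp]: "pair 0 \<psi> = 0"
  by (simp add: pair_def)

lemma ofreal_smult: "(of_real r :: 'k::real_normed_field) *s (x::'k^'n) = r *\<^sub>R x"
  by (simp add: vec_eq_iff of_real_def)

locale fdnorm =
  fixes N :: "'k::{real_normed_field,heine_borel}^'n \<Rightarrow> real"
  assumes isn: "is_norm N"
begin

lemma N_zero_iff: "N x = 0 \<longleftrightarrow> x = 0" using isn by (simp add: is_norm_def)
lemma N_scale: "N (c *s x) = norm c * N x" using isn by (simp add: is_norm_def)
lemma N_tri: "N (x + y) \<le> N x + N y" using isn by (simp add: is_norm_def)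
lemma N_0[simp]: "N 0 = 0" using N_zero_iff by simp
lemma N_minus: "N (- x) = N x"
proof -
  have "- x = (-1) *s x" by (simp add: vec_eq_iff)
  then show ?thesis using N_scale[of "-1" x] by simp
qed
lemma N_nonneg: "N x \<ge> 0"
proof -
  have "N (x + - x) \<le> N x + N (-x)" by (rule N_tri)
  then show ?thesis by (simp add: N_minus)
qed
lemma N_pos: "x \<noteq> 0 \<Longrightarrow> N x > 0"
  using N_nonneg N_zero_iff by (metis less_eq_real_def)
lemma N_diff_sym: "N (x - y) = N (y - x)"
  by (metis N_minus minus_diff_eq)
lemma N_rev_tri: "\<bar>N x - N y\<bar> \<le> N (x - y)"
proof -
  have "N x \<le> N (x - y) + N y" using N_tri[of "x - y" y] by simp
  moreover have "N y \<le> N (y - x) + N x" using N_tri[of "y - x" x] by simp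
  ultimately show ?thesis using N_diff_sym[of x y] by linarith
qed
lemma N_sum: "finite A \<Longrightarrow> N (\<Sum>i\<in>A. f i) \<le> (\<Sum>i\<in>A. N (f i))"
proof (induction A rule: finite_induct)
  case empty then show ?case by simp
next
  case (insert a A)
  then show ?case using N_tri[of "f a" "sum f A"] by simp
qed

definition AN :: real where "AN = (\<Sum>j\<in>UNIV. N (axis j 1))"

lemma AN_nonneg: "AN \<ge> 0" unfolding AN_def by (intro sum_nonneg N_nonneg)

lemma N_le_l1: "N x \<le> (\<Sum>j\<in>UNIV. norm (x$j) * N (axis j 1))"
proof -
  have "N x = N (\<Sum>j\<in>UNIV. (x$j) *s axis j 1)" by (simp add: basis_expansion)
  also have "\<dots> \<le> (\<Sum>j\<in>UNIV. N ((x$j) *s axis j 1))" by (rule N_sum) simp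
  also have "\<dots> = (\<Sum>j\<in>UNIV. norm (x$j) * N (axis j 1))" by (simp add: N_scale)
  finally show ?thesis .
qed

lemma N_le_norm: "N x \<le> AN * norm x"
proof -
  have "N x \<le> (\<Sum>j\<in>UNIV. norm (x$j) * N (axis j 1))" by (rule N_le_l1)
  also have "\<dots> \<le> (\<Sum>j\<in>UNIV. norm x * N (axis j 1))"
    by (intro sum_mono mult_right_mono Finite_Cartesian_Product.norm_nth_le N_nonneg)
  also have "\<dots> = AN * norm x" by (simp add: AN_def sum_distrib_left mult.commute)
  finally show ?thesis .
qed

lemma N_lip: "dist (N x) (N y) \<le> (AN + 1) * dist x y"
proof -
  have "dist (N x) (N y) \<le> AN * dist x y"
    using N_rev_tri[of x y] N_le_norm[of "x - y"] by (simp add: dist_norm dist_real_def)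
  also have "\<dots> \<le> (AN + 1) * dist x y" by (intro mult_right_mono) auto
  finally show ?thesis .
qed

lemma N_cont: "continuous_on A N"
proof (rule uniformly_continuous_imp_continuous, unfold uniformly_continuous_on_def, intro allI impI)
  fix e :: real assume e: "e > 0"
  have p: "AN + 1 > 0" using AN_nonneg by simp
  show "\<exists>d>0. \<forall>x\<in>A. \<forall>x'\<in>A. dist x' x < d \<longrightarrow> dist (N x') (N x) < e"
  proof (intro exI[of _ "e / (AN + 1)"] conjI ballI impI)
    show "e / (AN + 1) > 0" using e p by simp
    fix x x' :: "'k^'n" assume "dist x' x < e / (AN + 1)"
    then have "(AN + 1) * dist x' x < e" using p by (simp add: pos_less_divide_eq mult.commute)
    then show "dist (N x') (N x) < e" using N_lip[of x' x] by linarith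
  qed
qed

lemma N_lower: "\<exists>m>0. \<forall>x. m * norm x \<le> N x"
proof -
  have "compact (sphere (0::'k^'n) 1)" by simp
  moreover have "sphere (0::'k^'n) 1 \<noteq> {}"
  proof -
    obtain j :: 'n where True by simp
    define v where "v = axis j (1::'k)"
    have "v $ j = 1" by (simp add: v_def axis_def)
    then have "v \<noteq> 0" by auto
    then have "norm (of_real (1 / norm v) *s v) = 1"
      by (simp only: ofreal_smult) simp
    then show ?thesis by (auto simp: sphere_def)
  qed
  ultimately obtain z where z: "z \<in> sphere 0 1" and zmin: "\<forall>y\<in>sphere 0 1. N z \<le> N y"
    using continuous_attains_inf[OF _ _ N_cont] by blast
  have "z \<noteq> 0" using z by auto
  then have mpos: "N z > 0" by (rule N_pos)
  have "N z * norm x \<le> N x" for x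
  proof (cases "x = 0")
    case True then show ?thesis by simp
  next
    case False
    define y where "y = of_real (1 / norm x) *s x"
    have "norm y = 1" using False by (simp only: y_def ofreal_smult) simp
    then have "N z \<le> N y" using zmin by simp
    also have "N y = N x / norm x" by (simp add: y_def N_scale norm_divide)
    finally show ?thesis using False by (simp add: pos_le_divide_eq)
  qed
  then show ?thesis using mpos by blast
qed

end


context fdnorm begin

definition mN :: real where "mN = (SOME m. m > 0 \<and> (\<forall>x. m * norm x \<le> N x))"
lemma mN: "mN > 0" "mN * norm x \<le> N x"
  using someI_ex[OF N_lower] unfolding mN_def by auto

lemma norm_le_N: "norm x \<le> N x / mN"
  using mN by (simp add: pos_le_divide_eq mult.commute)

abbreviation S where "S \<equiv> sphere_N N"

lemma S_compact: "compact S"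
proof (rule compact_eq_bounded_closed[THEN iffD2], rule conjI)
  show "bounded S"
    unfolding bounded_iff sphere_N_def by (intro exI[of _ "1 / mN"] ballI) (metis mem_Collect_eq norm_le_N)
  have "closed (N -` {1})" by (rule closed_vimage) (auto intro: N_cont)
  then show "closed S" by (simp add: sphere_N_def vimage_def)
qed

lemma S_ne: "S \<noteq> {}"
proof -
  obtain j :: 'n where True by simp
  define v where "v = axis j (1::'k)"
  have "v $ j = 1" by (simp add: v_def axis_def)
  then have "v \<noteq> 0" by auto
  then have "N v > 0" by (rule N_pos)
  then have "N (of_real (1 / N v) *s v) = 1" by (simp add: N_scale norm_divide)
  then show ?thesis by (auto simp: sphere_N_def)
qed

lemma normalize_S: "z \<noteq> 0 \<Longrightarrow> of_real (1 / N z) *s z \<in> S \<and> z = of_real (N z) *s (of_real (1 / N z) *s z)"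
proof -
  assume z: "z \<noteq> 0"
  then have p: "N z > 0" by (rule N_pos)
  then have "N (of_real (1 / N z) *s z) = 1" by (simp add: N_scale norm_divide)
  moreover have "z = of_real (N z) *s (of_real (1 / N z) *s z)"
    using p by (simp add: vec_eq_iff)
  ultimately show ?thesis by (simp add: sphere_N_def)
qed

definition mx :: "'k^'n \<Rightarrow> real" where "mx \<psi> = Max (range (\<lambda>j. norm (\<psi> $ j)))"
lemma mx_ge: "norm (\<psi> $ j) \<le> mx \<psi>" unfolding mx_def by (rule Max_ge) auto
lemma mx_nonneg: "mx \<psi> \<ge> 0" using mx_ge[of \<psi>] norm_ge_zero by (meson order_trans)

definition KD :: real where "KD = real CARD('n) / mN"
lemma KD_pos: "KD > 0" using mN by (simp add: KD_def)

lemma pair_bound: "norm (pair x \<psi>) \<le> KD * N x * mx \<psi>"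
proof -
  have "norm (pair x \<psi>) \<le> (\<Sum>j\<in>UNIV. norm (x $ j * \<psi> $ j))"
    unfolding pair_def by (rule norm_sum)
  also have "\<dots> \<le> (\<Sum>j\<in>(UNIV::'n set). (N x / mN) * mx \<psi>)"
  proof (rule sum_mono)
    fix j assume "j \<in> (UNIV::'n set)"
    have "norm (x $ j) \<le> N x / mN"
      by (rule order_trans[OF Finite_Cartesian_Product.norm_nth_le norm_le_N])
    then show "norm (x $ j * \<psi> $ j) \<le> N x / mN * mx \<psi>"
      unfolding norm_mult using mN(1) N_nonneg[of x] by (intro mult_mono mx_ge mx_nonneg) auto
  qed
  also have "\<dots> = KD * N x * mx \<psi>" by (simp add: KD_def)
  finally show ?thesis .
qed

lemma dual_bdd: "bdd_above ((\<lambda>x. norm (pair x \<psi>)) ` S)"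
  by (rule bdd_aboveI[of _ "KD * mx \<psi>"]) (auto simp: sphere_N_def intro: order_trans[OF pair_bound])

lemma pair_le_dual: "x \<in> S \<Longrightarrow> norm (pair x \<psi>) \<le> dual_norm N \<psi>"
  unfolding dual_norm_def by (rule cSUP_upper[OF _ dual_bdd])

lemma dual_nonneg: "dual_norm N \<psi> \<ge> 0"
proof -
  obtain x where "x \<in> S" using S_ne by blast
  then show ?thesis using pair_le_dual[of x \<psi>] norm_ge_zero by (meson order_trans)
qed

lemma dual_le_mx: "dual_norm N \<psi> \<le> KD * mx \<psi>"
  unfolding dual_norm_def using S_ne
  by (intro cSUP_least) (auto simp: sphere_N_def intro: order_trans[OF pair_bound])

lemma pair_le_dual_N: "norm (pair z \<psi>) \<le> dual_norm N \<psi> * N z"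
proof (cases "z = 0")
  case True then show ?thesis by simp
next
  case False
  define y where "y = of_real (1 / N z) *s z"
  have y: "y \<in> S" "z = of_real (N z) *s y" using normalize_S[OF False] by (auto simp: y_def)
  have "norm (pair z \<psi>) = N z * norm (pair y \<psi>)"
    by (subst y(2)) (simp add: pair_scale norm_mult N_nonneg)
  also have "\<dots> \<le> N z * dual_norm N \<psi>" by (intro mult_left_mono pair_le_dual y N_nonneg)
  finally show ?thesis by (simp add: mult.commute)
qed

lemma prod_pair_le: "x \<in> S \<Longrightarrow> norm (\<Prod>i<n. pair x (\<psi> i)) \<le> (\<Prod>i<n. dual_norm N (\<psi> i))"
  by (simp add: prod_norm[symmetric] prod_mono pair_le_dual)

lemma prod_bdd: "bdd_above ((\<lambda>x. norm (\<Prod>i<n. pair x (\<psi> i))) ` S)"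
  by (rule bdd_aboveI[of _ "\<Prod>i<n. dual_norm N (\<psi> i)"]) (auto intro: prod_pair_le)

lemma prod_le_prod_norm: "x \<in> S \<Longrightarrow> norm (\<Prod>i<n. pair x (\<psi> i)) \<le> prod_norm N n \<psi>"
  unfolding prod_norm_def by (rule cSUP_upper[OF _ prod_bdd])

lemma prod_norm_nonneg: "prod_norm N n \<psi> \<ge> 0"
proof -
  obtain x where "x \<in> S" using S_ne by blast
  then show ?thesis using prod_le_prod_norm[of x \<psi> n] norm_ge_zero by (meson order_trans)
qed

lemma prod_norm_le: "(\<forall>x\<in>S. norm (\<Prod>i<n. pair x (\<psi> i)) \<le> B) \<Longrightarrow> prod_norm N n \<psi> \<le> B"
  unfolding prod_norm_def using S_ne by (intro cSUP_least) auto

end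


lemma root_unity_extract:
  fixes P :: "complex poly"
  shows "\<exists>w. norm w = 1 \<and> norm (lead_coeff P) \<le> norm (poly P w)"
proof -
  define D where "D = degree P"
  define M where "M = Suc D"
  define \<omega> where "\<omega> = cis (2 * pi / real M)"
  have Mpos: "real M > 0" by (simp add: M_def)
  have wpow: "\<omega> ^ n = cis (2 * pi * real n / real M)" for n
    unfolding \<omega>_def Complex.DeMoivre by (simp add: field_simps)
  have nw: "norm (\<omega> ^ n) = 1" for n by (simp add: wpow)
  have M1: "\<omega> ^ M = 1" using Mpos by (simp add: wpow)
  have ne1: "\<omega> ^ n \<noteq> 1" if "0 < n" "n < M" for n
  proof
    assume "\<omega> ^ n = 1"
    then have "cos (2 * pi * real n / real M) = 1"
      using wpow[of n] by (metis Re_complex_of_real complex_of_real_def cis.simps(1) one_complex.sel(1))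
    then obtain k :: int where k: "2 * pi * real n / real M = k * 2 * pi"
      by (auto simp: cos_one_2pi_int)
    then have "(2*pi) * (real n / real M) = (2*pi) * k" by (subst times_divide_eq_right, subst k) simp
    then have "real n / real M = k" using pi_gt_zero by (subst (asm) mult_left_cancel) auto
    moreover have "0 < real n / real M" "real n / real M < 1" using that Mpos by auto
    ultimately have "0 < real_of_int k" "real_of_int k < 1" by auto
    then have "0 < k" "k < 1" by simp_all
    then show False by simp
  qed
  have inner: "(\<Sum>k<M. (\<omega> ^ Suc j) ^ k) = (if j = D then of_nat M else 0)" if "j \<le> D" for j
  proof (cases "j = D")
    case True
    then have "\<omega> ^ Suc j = 1" using M1 by (simp add: M_def)
    then show ?thesis using True by simp
  next
    case False
    then have "\<omega> ^ Suc j \<noteq> 1" using that by (intro ne1) (auto simp: M_def)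
    moreover have "(\<omega> ^ Suc j) ^ M = 1" by (metis M1 power_mult mult.commute power_one)
    ultimately show ?thesis using False by (simp add: sum_gp_strict)
  qed
  have key: "(\<Sum>k<M. poly P (\<omega> ^ k) * \<omega> ^ k) = of_nat M * coeff P D"
  proof -
    have "(\<Sum>k<M. poly P (\<omega> ^ k) * \<omega> ^ k) = (\<Sum>k<M. \<Sum>j\<le>D. coeff P j * (\<omega> ^ Suc j) ^ k)"
    proof (intro sum.cong refl)
      fix k
      have e: "(\<omega> ^ k) ^ j * \<omega> ^ k = (\<omega> ^ Suc j) ^ k" for j
        by (metis power_Suc2 power_mult mult.commute)
      show "poly P (\<omega> ^ k) * \<omega> ^ k = (\<Sum>j\<le>D. coeff P j * (\<omega> ^ Suc j) ^ k)"
        by (simp add: poly_altdef D_def sum_distrib_right mult.assoc e)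
    qed
    also have "\<dots> = (\<Sum>j\<le>D. coeff P j * (\<Sum>k<M. (\<omega> ^ Suc j) ^ k))"
      by (subst sum.swap) (simp add: sum_distrib_left)
    also have "\<dots> = (\<Sum>j\<le>D. (if j = D then coeff P D * of_nat M else 0))"
    proof (intro sum.cong refl)
      fix j assume "j \<in> {..D}"
      then have "(\<Sum>k<M. (\<omega> ^ Suc j) ^ k) = (if j = D then of_nat M else 0)" by (intro inner) auto
      then show "coeff P j * (\<Sum>k<M. (\<omega> ^ Suc j) ^ k) = (if j = D then coeff P D * of_nat M else 0)"
        by (simp del: power_Suc)
    qed
    also have "\<dots> = of_nat M * coeff P D" by simp
    finally show ?thesis .
  qed
  show ?thesis
  proof (rule ccontr)
    assume "\<not> ?thesis"
    then have lt: "norm (poly P (\<omega> ^ k)) < norm (lead_coeff P)" for k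
      using nw[of k] by (meson not_le)
    have "real M * norm (lead_coeff P) = norm (\<Sum>k<M. poly P (\<omega> ^ k) * \<omega> ^ k)"
      by (simp add: key D_def norm_mult)
    also have "\<dots> \<le> (\<Sum>k<M. norm (poly P (\<omega> ^ k) * \<omega> ^ k))" by (rule norm_sum)
    also have "\<dots> = (\<Sum>k<M. norm (poly P (\<omega> ^ k)))" by (simp add: norm_mult nw)
    also have "\<dots> < (\<Sum>k<M. norm (lead_coeff P))"
      by (rule sum_strict_mono) (auto simp: M_def lt)
    also have "\<dots> = real M * norm (lead_coeff P)" by simp
    finally show False by simp
  qed
qed

lemma circle_re: "norm w = 1 \<Longrightarrow> norm (a + of_real (Re w) * b) = norm ((b/2) * w^2 + a * w + b/2)"
proof -
  assume w: "norm w = 1"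
  then have wc: "w * cnj w = 1"
    by (metis complex_norm_square mult.commute of_real_1 power_one)
  have re: "of_real (Re w) = (w + cnj w) / 2" by (simp add: complex_add_cnj)
  have "w * (a + (w + cnj w) / 2 * b) = a*w + b/2 * w^2 + b/2 * (w * cnj w)"
    by (simp add: algebra_simps power2_eq_square add_divide_distrib)
  then have "(b/2) * w^2 + a * w + b/2 = w * (a + of_real (Re w) * b)"
    unfolding re wc by (simp add: algebra_simps)
  then show ?thesis using w by (simp add: norm_mult)
qed

lemma quad:
  fixes a b :: complex
  assumes ab: "a \<noteq> 0 \<or> b \<noteq> 0"
  shows "\<exists>Q. degree Q = 2 \<and> max (norm a) (norm b) / 2 \<le> norm (lead_coeff Q)
             \<and> (\<forall>w. norm w = 1 \<longrightarrow> norm (poly Q w) = norm (a + of_real (Re w) * b))"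
proof (cases "b = 0")
  case True
  then have a: "a \<noteq> 0" using ab by simp
  define Q where "Q = [:0, 0, a:]"
  have "degree Q = 2" using a by (simp add: Q_def)
  moreover have "lead_coeff Q = a" using a by (simp add: Q_def)
  moreover have "norm (poly Q w) = norm (a + of_real (Re w) * b)" if "norm w = 1" for w
    using that True by (simp add: Q_def norm_mult)
  ultimately show ?thesis using True by (intro exI[of _ Q]) auto
next
  case False
  define p where "p = a / b"
  define s where "s = csqrt (p^2 - 1)"
  define r1 where "r1 = - p + s"
  define r2 where "r2 = - p - s"
  have "r1 * r2 = p^2 - s^2" unfolding r1_def r2_def by (simp add: algebra_simps power2_eq_square)
  moreover have "s^2 = p^2 - 1" unfolding s_def by (rule power2_csqrt)
  ultimately have r12: "r1 * r2 = 1" by simp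
  have r12s: "r1 + r2 = - 2 * p" by (simp add: r1_def r2_def)
  obtain r r' where rr: "r * r' = 1" "r + r' = - 2 * p" "norm r \<ge> 1"
  proof (cases "norm r1 \<ge> 1")
    case True then show ?thesis using that r12 r12s by blast
  next
    case False
    have "norm r1 * norm r2 = 1" using r12 by (metis norm_mult norm_one)
    have "norm r2 \<ge> 1"
    proof (rule ccontr)
      assume "\<not> norm r2 \<ge> 1"
      then have "norm r1 * norm r2 \<le> norm r1" by (intro mult_left_le) auto
      with \<open>norm r1 * norm r2 = 1\<close> False show False by linarith
    qed
    then show ?thesis using that[of r2 r1] r12 r12s by (simp add: mult.commute add.commute)
  qed
  have r0: "r \<noteq> 0" using rr(3) by auto
  have nr': "norm r' \<le> 1"
  proof -
    have "norm r * norm r' = 1" using rr(1) by (metis norm_mult norm_one)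
    show ?thesis
    proof (rule ccontr)
      assume "\<not> norm r' \<le> 1"
      then have "norm r * 1 < norm r * norm r'" using rr(3) by (intro mult_strict_left_mono) auto
      with \<open>norm r * norm r' = 1\<close> rr(3) show False by linarith
    qed
  qed
  define Q where "Q = smult (b/2) ([:1, - cnj r:] * [:- r', 1:])"
  have d1: "degree [:1, - cnj r:] = 1" using r0 by simp
  have d2: "degree [:- r', 1:] = 1" by simp
  have nz1: "[:1, - cnj r:] \<noteq> 0" by simp
  have nz2: "[:- r', 1:] \<noteq> 0" by simp
  have dQ: "degree Q = 2" unfolding Q_def
    by (simp only: degree_smult_eq degree_mult_eq[OF nz1 nz2] d1 d2) (use False in simp)
  have l1: "lead_coeff [:1, - cnj r:] = - cnj r" using d1 by simp
  have lQ: "lead_coeff Q = (b/2) * (- cnj r)" unfolding Q_def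
    by (simp only: lead_coeff_smult lead_coeff_mult l1) simp
  have nlQ: "norm (lead_coeff Q) = norm b * norm r / 2" by (simp add: lQ norm_mult norm_divide)
  have "norm a = norm b * norm p" using False by (simp add: p_def norm_divide)
  also have "norm p = norm (r + r') / 2" using rr(2) by (simp add: norm_minus_commute norm_mult)
  also have "\<dots> \<le> (norm r + norm r') / 2" by (simp add: norm_triangle_ineq)
  also have "\<dots> \<le> norm r" using nr' rr(3) by simp
  finally have "norm a \<le> norm b * norm r" by (simp add: mult_left_mono)
  moreover have "norm b \<le> norm b * norm r" using rr(3) by (simp add: mult_le_cancel_left1)
  ultimately have lead_ok: "max (norm a) (norm b) / 2 \<le> norm (lead_coeff Q)"
    unfolding nlQ by simp
  have circ: "norm (poly Q w) = norm (a + of_real (Re w) * b)" if w: "norm w = 1" for w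
  proof -
    have wc: "w * cnj w = 1"
      using w by (metis complex_norm_square mult.commute of_real_1 power_one)
    have "1 - cnj r * w = w * cnj (w - r)" using wc by (simp add: algebra_simps)
    then have n1: "norm (1 - cnj r * w) = norm (w - r)" using w by (simp only: norm_mult complex_mod_cnj)
    have "poly Q w = (b/2) * ((1 - cnj r * w) * (w - r'))"
      by (simp add: Q_def algebra_simps)
    then have "norm (poly Q w) = norm (b/2) * norm (1 - cnj r * w) * norm (w - r')"
      by (simp only: norm_mult mult.assoc)
    also have "\<dots> = norm ((b/2) * (w - r) * (w - r'))" by (simp add: n1 norm_mult)
    also have "(b/2) * (w - r) * (w - r') = (b/2) * w^2 + a * w + b/2"
    proof -
      have "(w - r) * (w - r') = w^2 - (r + r') * w + r * r'" by (simp add: algebra_simps power2_eq_square)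
      also have "\<dots> = w^2 + 2 * p * w + 1" using rr by simp
      finally show ?thesis using False by (simp add: p_def field_simps)
    qed
    also have "norm \<dots> = norm (a + of_real (Re w) * b)" using circle_re[OF w] by simp
    finally show ?thesis .
  qed
  show ?thesis using dQ lead_ok circ by blast
qed

lemma oneD_complex:
  fixes \<alpha> \<beta> :: "nat \<Rightarrow> complex"
  assumes fin: "finite I"
  shows "\<exists>t::real. -1 \<le> t \<and> t \<le> 1 \<and>
    (1/2)^card I * (\<Prod>i\<in>I. max (norm (\<alpha> i)) (norm (\<beta> i))) \<le> (\<Prod>i\<in>I. norm (\<alpha> i + of_real t * \<beta> i))"
proof (cases "\<exists>i\<in>I. \<alpha> i = 0 \<and> \<beta> i = 0")
  case True
  then have "(\<Prod>i\<in>I. max (norm (\<alpha> i)) (norm (\<beta> i))) = 0"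
    using fin by (subst prod_zero_iff) (auto intro!: bexI)
  then show ?thesis by (intro exI[of _ 0]) (simp add: prod_nonneg)
next
  case False
  then have "\<forall>i\<in>I. \<exists>Q. degree Q = 2 \<and> max (norm (\<alpha> i)) (norm (\<beta> i)) / 2 \<le> norm (lead_coeff Q)
             \<and> (\<forall>w. norm w = 1 \<longrightarrow> norm (poly Q w) = norm (\<alpha> i + of_real (Re w) * \<beta> i))"
    by (intro ballI quad) auto
  then obtain Q where Q: "\<And>i. i \<in> I \<Longrightarrow> max (norm (\<alpha> i)) (norm (\<beta> i)) / 2 \<le> norm (lead_coeff (Q i))"
     "\<And>i w. i \<in> I \<Longrightarrow> norm w = 1 \<Longrightarrow> norm (poly (Q i) w) = norm (\<alpha> i + of_real (Re w) * \<beta> i)"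
    by (metis bchoice)
  define P where "P = (\<Prod>i\<in>I. Q i)"
  obtain w where w: "norm w = 1" "norm (lead_coeff P) \<le> norm (poly P w)"
    using root_unity_extract by blast
  define t where "t = Re w"
  have t: "-1 \<le> t" "t \<le> 1" using abs_Re_le_cmod[of w] w(1) by (auto simp: t_def)
  have "(1/2)^card I * (\<Prod>i\<in>I. max (norm (\<alpha> i)) (norm (\<beta> i)))
        = (\<Prod>i\<in>I. max (norm (\<alpha> i)) (norm (\<beta> i)) / 2)"
    by (simp add: prod_dividef power_one_over)
  also have "\<dots> \<le> (\<Prod>i\<in>I. norm (lead_coeff (Q i)))"
    by (intro prod_mono conjI Q(1)) (auto simp: le_max_iff_disj)
  also have "\<dots> = norm (lead_coeff P)" by (simp add: P_def lead_coeff_prod prod_norm)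
  also have "\<dots> \<le> norm (poly P w)" by (rule w(2))
  also have "\<dots> = (\<Prod>i\<in>I. norm (poly (Q i) w))" by (simp add: P_def poly_prod prod_norm)
  also have "\<dots> = (\<Prod>i\<in>I. norm (\<alpha> i + of_real t * \<beta> i))"
    by (intro prod.cong refl) (simp add: Q(2) w(1) t_def)
  finally show ?thesis using t by blast
qed


lemma pair_axis: "pair (axis k 1) \<psi> = \<psi> $ k"
proof -
  have "pair (axis k 1) \<psi> = (\<Sum>j\<in>UNIV. (if j = k then \<psi> $ j else 0))"
    unfolding pair_def by (intro sum.cong refl) (simp add: axis_def)
  also have "\<dots> = \<psi> $ k" by simp
  finally show ?thesis .
qed

definition mxJ :: "'n set \<Rightarrow> 'k::real_normed_field^'n \<Rightarrow> real" where
  "mxJ J \<psi> = Max (insert 0 ((\<lambda>j. norm (\<psi> $ j)) ` J))"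

lemma mxJ_nonneg: "finite J \<Longrightarrow> mxJ J \<psi> \<ge> 0" unfolding mxJ_def by (rule Max_ge) auto
lemma mxJ_empty: "mxJ {} \<psi> = 0" unfolding mxJ_def by simp
lemma mxJ_insert: "finite J \<Longrightarrow> mxJ (insert k J) \<psi> = max (mxJ J \<psi>) (norm (\<psi> $ k))"
proof -
  assume f: "finite J"
  have "insert 0 ((\<lambda>j. norm (\<psi> $ j)) ` insert k J) = insert (norm (\<psi> $ k)) (insert 0 ((\<lambda>j. norm (\<psi> $ j)) ` J))"
    by auto
  then show ?thesis unfolding mxJ_def using f by (simp add: max.commute)
qed

locale fdnorm1 = fdnorm N for N :: "'k::{real_normed_field,heine_borel}^'n \<Rightarrow> real" +
  assumes h1d: "\<And>I (\<alpha>::nat\<Rightarrow>'k) \<beta>. finite I \<Longrightarrow> \<exists>t::real. -1 \<le> t \<and> t \<le> 1 \<and>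
    (1/2)^card I * (\<Prod>i\<in>I. max (norm (\<alpha> i)) (norm (\<beta> i))) \<le> (\<Prod>i\<in>I. norm (\<alpha> i + of_real t * \<beta> i))"
begin

lemma cube_claim:
  assumes "finite J"
  shows "\<forall>I (a::nat \<Rightarrow> 'k^'n). finite I \<longrightarrow> (\<exists>t::'n\<Rightarrow>real. (\<forall>j. \<bar>t j\<bar> \<le> 1) \<and> (\<forall>j. j \<notin> J \<longrightarrow> t j = 0) \<and>
     (1/2)^(card I * card J) * (\<Prod>i\<in>I. mxJ J (a i)) \<le> (\<Prod>i\<in>I. norm (pair (\<chi> j. of_real (t j)) (a i))))"
  using assms
proof (induction J rule: finite_induct)
  case empty
  show ?case
  proof (intro allI impI)
    fix I :: "nat set" and a :: "nat \<Rightarrow> 'k^'n" assume "finite I"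
    show "\<exists>t::'n\<Rightarrow>real. (\<forall>j. \<bar>t j\<bar> \<le> 1) \<and> (\<forall>j. j \<notin> {} \<longrightarrow> t j = 0) \<and>
     (1/2)^(card I * card ({}::'n set)) * (\<Prod>i\<in>I. mxJ {} (a i)) \<le> (\<Prod>i\<in>I. norm (pair (\<chi> j. of_real (t j)) (a i)))"
    proof (cases "I = {}")
      case True then show ?thesis by (intro exI[of _ "\<lambda>_. 0"]) simp
    next
      case False
      then have "(\<Prod>i\<in>I. mxJ {} (a i)) = 0" using \<open>finite I\<close> by (simp add: mxJ_empty card_gt_0_iff)
      then show ?thesis by (intro exI[of _ "\<lambda>_. 0"]) (simp add: prod_nonneg)
    qed
  qed
next
  case (insert k J)
  show ?case
  proof (intro allI impI)
    fix I :: "nat set" and a :: "nat \<Rightarrow> 'k^'n" assume finI: "finite I"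
    define I1 where "I1 = {i\<in>I. mxJ J (a i) \<le> norm (a i $ k)}"
    define I2 where "I2 = I - I1"
    have fin1: "finite I1" "finite I2" using finI by (auto simp: I1_def I2_def)
    have disj: "I1 \<inter> I2 = {}" "I = I1 \<union> I2" by (auto simp: I1_def I2_def)
    obtain t where t: "\<forall>j. \<bar>t j\<bar> \<le> 1" "\<forall>j. j \<notin> J \<longrightarrow> t j = 0"
      "(1/2)^(card I2 * card J) * (\<Prod>i\<in>I2. mxJ J (a i)) \<le> (\<Prod>i\<in>I2. norm (pair (\<chi> j. of_real (t j)) (a i)))"
      using insert.IH fin1(2) by blast
    define x where "x = (\<chi> j. (of_real (t j) :: 'k))"
    define \<alpha> where "\<alpha> i = pair x (a i)" for i
    define \<beta> where "\<beta> i = a i $ k" for i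
    obtain s where s: "-1 \<le> s" "s \<le> 1"
      "(1/2)^card I * (\<Prod>i\<in>I. max (norm (\<alpha> i)) (norm (\<beta> i))) \<le> (\<Prod>i\<in>I. norm (\<alpha> i + of_real s * \<beta> i))"
      using h1d[OF finI] by blast
    define t' where "t' = t(k := s)"
    have tk: "t k = 0" using t(2) insert.hyps(2) by simp
    have x': "(\<chi> j. (of_real (t' j) :: 'k)) = x + of_real s *s axis k 1"
      unfolding x_def t'_def using tk by (simp add: vec_eq_iff axis_def)
    have pair': "pair (\<chi> j. (of_real (t' j) :: 'k)) (a i) = \<alpha> i + of_real s * \<beta> i" for i
      unfolding x' pair_add pair_scale pair_axis \<alpha>_def \<beta>_def by simp
    have mx1: "mxJ (insert k J) (a i) \<le> max (norm (\<alpha> i)) (norm (\<beta> i))" if "i \<in> I1" for i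
      using that insert.hyps(1) by (simp add: mxJ_insert I1_def \<beta>_def)
    have mx2: "mxJ (insert k J) (a i) = mxJ J (a i)" if "i \<in> I2" for i
      using that insert.hyps(1) by (auto simp: mxJ_insert I1_def I2_def max_def)
    have nn: "\<And>i. mxJ J (a i) \<ge> 0" "\<And>i. mxJ (insert k J) (a i) \<ge> 0"
      using insert.hyps(1) by (auto intro: mxJ_nonneg)
    have cardJ: "card (insert k J) = Suc (card J)" using insert.hyps by simp
    have c12: "card I = card I1 + card I2" using disj fin1 by (simp add: card_Un_disjoint)
    have "(1/2)^(card I * card (insert k J)) * (\<Prod>i\<in>I. mxJ (insert k J) (a i))
        = (1/2)^card I * ((1/2)^(card I * card J) * ((\<Prod>i\<in>I1. mxJ (insert k J) (a i)) * (\<Prod>i\<in>I2. mxJ J (a i))))"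
      unfolding cardJ disj(2) using fin1 disj(1)
      by (simp add: prod.union_disjoint mx2 power_add c12 algebra_simps)
    also have "\<dots> \<le> (1/2)^card I * ((\<Prod>i\<in>I1. mxJ (insert k J) (a i)) * ((1/2)^(card I2 * card J) * (\<Prod>i\<in>I2. mxJ J (a i))))"
    proof -
      have "(1/2::real)^(card I * card J) \<le> (1/2)^(card I2 * card J)"
        by (intro power_decreasing) (auto simp: c12)
      then have h: "(1/2::real)^(card I * card J) * ((\<Prod>i\<in>I1. mxJ (insert k J) (a i)) * (\<Prod>i\<in>I2. mxJ J (a i)))
          \<le> (1/2)^(card I2 * card J) * ((\<Prod>i\<in>I1. mxJ (insert k J) (a i)) * (\<Prod>i\<in>I2. mxJ J (a i)))"
        by (rule mult_right_mono) (intro mult_nonneg_nonneg prod_nonneg ballI nn)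
      show ?thesis
        using h by (intro mult_left_mono) (auto simp: ac_simps)
    qed
    also have "\<dots> \<le> (1/2)^card I * ((\<Prod>i\<in>I1. max (norm (\<alpha> i)) (norm (\<beta> i))) * (\<Prod>i\<in>I2. norm (\<alpha> i)))"
    proof -
      have t3: "(1/2)^(card I2 * card J) * (\<Prod>i\<in>I2. mxJ J (a i)) \<le> (\<Prod>i\<in>I2. norm (\<alpha> i))"
        using t(3) by (simp add: \<alpha>_def x_def)
      show ?thesis
        using t3 mx1 nn by (intro mult_left_mono mult_mono prod_mono) (auto intro!: prod_nonneg max.coboundedI1 mult_nonneg_nonneg)
    qed
    also have "\<dots> \<le> (1/2)^card I * ((\<Prod>i\<in>I1. max (norm (\<alpha> i)) (norm (\<beta> i))) * (\<Prod>i\<in>I2. max (norm (\<alpha> i)) (norm (\<beta> i))))"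
      by (intro mult_left_mono mult_mono prod_mono) (auto intro!: prod_nonneg max.coboundedI1)
    also have "\<dots> = (1/2)^card I * (\<Prod>i\<in>I. max (norm (\<alpha> i)) (norm (\<beta> i)))"
      unfolding disj(2) using fin1 disj(1) by (simp add: prod.union_disjoint)
    also have "\<dots> \<le> (\<Prod>i\<in>I. norm (pair (\<chi> j. of_real (t' j)) (a i)))"
      using s(3) by (simp add: pair')
    finally show "\<exists>t::'n\<Rightarrow>real. (\<forall>j. \<bar>t j\<bar> \<le> 1) \<and> (\<forall>j. j \<notin> insert k J \<longrightarrow> t j = 0) \<and>
     (1/2)^(card I * card (insert k J)) * (\<Prod>i\<in>I. mxJ (insert k J) (a i)) \<le> (\<Prod>i\<in>I. norm (pair (\<chi> j. of_real (t j)) (a i)))"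
      using t(1,2) s(1,2) by (intro exI[of _ t'] conjI) (auto simp: t'_def)
  qed
qed

lemma N_cube: "(\<forall>j. \<bar>t j\<bar> \<le> 1) \<Longrightarrow> N (\<chi> j. (of_real (t j) :: 'k)) \<le> AN"
proof -
  assume t: "\<forall>j. \<bar>t j\<bar> \<le> 1"
  have "N (\<chi> j. (of_real (t j) :: 'k)) \<le> (\<Sum>j\<in>UNIV. norm ((\<chi> j. (of_real (t j) :: 'k)) $ j) * N (axis j 1))"
    by (rule N_le_l1)
  also have "\<dots> \<le> (\<Sum>j\<in>UNIV. 1 * N (axis j 1))"
    using t by (intro sum_mono mult_right_mono N_nonneg) auto
  finally show ?thesis by (simp add: AN_def)
qed

lemma prod_scale:
  assumes "N x \<le> A"
  shows "(\<Prod>i<n. norm (pair x (\<psi> i))) \<le> A^n * prod_norm N n \<psi>"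
proof (cases "x = 0")
  case True
  show ?thesis
  proof (cases "n = 0")
    case True
    obtain z where "z \<in> S" using S_ne by blast
    then have "norm (\<Prod>i<n. pair z (\<psi> i)) \<le> prod_norm N n \<psi>" by (rule prod_le_prod_norm)
    then show ?thesis using True by simp
  next
    case False
    then have z: "(\<Prod>i<n. norm (pair x (\<psi> i))) = 0" using \<open>x = 0\<close> by (auto simp: prod_zero_iff)
    have "A \<ge> 0" using assms N_nonneg[of x] by linarith
    then have "0 \<le> A^n * prod_norm N n \<psi>" by (intro mult_nonneg_nonneg zero_le_power prod_norm_nonneg)
    then show ?thesis by (simp only: z)
  qed
next
  case False
  define y where "y = of_real (1 / N x) *s x"
  have y: "y \<in> S" "x = of_real (N x) *s y" using normalize_S[OF False] by (auto simp: y_def)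
  have "(\<Prod>i<n. norm (pair x (\<psi> i))) = N x ^ n * norm (\<Prod>i<n. pair y (\<psi> i))"
    by (subst y(2)) (simp add: pair_scale norm_mult prod.distrib N_nonneg prod_norm[symmetric])
  also have "\<dots> \<le> A ^ n * prod_norm N n \<psi>"
    using assms N_nonneg[of x] by (intro mult_mono power_mono assms N_nonneg prod_le_prod_norm y(1) prod_norm_nonneg zero_le_power) auto
  finally show ?thesis .
qed

lemma mx_le_mxJ: "mx \<psi> \<le> mxJ UNIV \<psi>"
  unfolding mx_def mxJ_def by (rule Max_mono) auto

theorem UB: "\<exists>C>0. \<forall>n \<psi>. (\<Prod>i<n. dual_norm N (\<psi> i)) \<le> C^n * prod_norm N n \<psi>"
proof -
  define d where "d = CARD('n)"
  define C where "C = KD * 2^d * AN + 1"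
  have KDp: "KD > 0" by (rule KD_pos)
  have Cpos: "C > 0" unfolding C_def using KDp AN_nonneg by (intro add_nonneg_pos mult_nonneg_nonneg) auto
  have "(\<Prod>i<n. dual_norm N (\<psi> i)) \<le> C^n * prod_norm N n \<psi>" for n \<psi>
  proof -
    obtain t where t: "\<forall>j. \<bar>t j\<bar> \<le> 1"
      "(1/2)^(card {..<n} * card (UNIV::'n set)) * (\<Prod>i\<in>{..<n}. mxJ UNIV (\<psi> i))
         \<le> (\<Prod>i\<in>{..<n}. norm (pair (\<chi> j. (of_real (t j)::'k)) (\<psi> i)))"
      using cube_claim[of UNIV] by (metis finite finite_lessThan)
    have nn: "\<And>i. mxJ UNIV (\<psi> i) \<ge> 0" by (rule mxJ_nonneg) simp
    have "(\<Prod>i<n. dual_norm N (\<psi> i)) \<le> (\<Prod>i<n. KD * mxJ UNIV (\<psi> i))"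
      by (intro prod_mono conjI dual_nonneg order_trans[OF dual_le_mx] mult_left_mono mx_le_mxJ) (use KDp in auto)
    also have "\<dots> = KD^n * (\<Prod>i<n. mxJ UNIV (\<psi> i))" by (simp add: prod.distrib)
    also have "(\<Prod>i<n. mxJ UNIV (\<psi> i)) \<le> (2^d)^n * (AN^n * prod_norm N n \<psi>)"
    proof -
      have "(1/2)^(n * d) * (\<Prod>i<n. mxJ UNIV (\<psi> i)) \<le> AN^n * prod_norm N n \<psi>"
        using t(2) order_trans[OF _ prod_scale[OF N_cube[OF t(1)]]] by (simp add: d_def)
      then have "(\<Prod>i<n. mxJ UNIV (\<psi> i)) \<le> 2^(n*d) * (AN^n * prod_norm N n \<psi>)"
        by (simp add: power_one_over field_simps)
      then show ?thesis by (simp add: power_mult[symmetric] mult.commute)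
    qed
    then have "KD^n * (\<Prod>i<n. mxJ UNIV (\<psi> i)) \<le> KD^n * ((2^d)^n * (AN^n * prod_norm N n \<psi>))"
      using KDp by (intro mult_left_mono) auto
    also have "\<dots> = (KD * 2^d * AN)^n * prod_norm N n \<psi>" by (simp add: power_mult_distrib)
    also have "\<dots> \<le> C^n * prod_norm N n \<psi>"
      using KDp AN_nonneg by (intro mult_right_mono power_mono prod_norm_nonneg) (auto simp: C_def)
    finally show ?thesis by simp
  qed
  then show ?thesis using Cpos by blast
qed

end


lemma prod_lessThan_add: "(\<Prod>i<n+m. f i) = (\<Prod>i<n. f i) * (\<Prod>i<m. f (i + n)) " for f :: "nat \<Rightarrow> real"
  by (induction m) (simp_all add: ac_simps)

lemma superadd_mult: 
  assumes "\<forall>p q. a p + a q \<le> a (p+q)" "a 0 \<ge> (0::real)"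
  shows "real q * a m \<le> a (q * m)"
proof (induction q)
  case 0 then show ?case using assms(2) by simp
next
  case (Suc q)
  have "real (Suc q) * a m = real q * a m + a m" by (simp add: algebra_simps)
  also have "\<dots> \<le> a (q * m) + a m" using Suc by simp
  also have "\<dots> \<le> a (q * m + m)" using assms(1) by blast
  finally show ?case by (simp add: add.commute)
qed

lemma fekete:
  fixes a :: "nat \<Rightarrow> real"
  assumes nn: "\<forall>k. 0 \<le> a k" and sa: "\<forall>p q. a p + a q \<le> a (p+q)" and ub: "\<forall>k. a k \<le> real k * B"
  shows "(\<lambda>k. a k / real k) \<longlonglongrightarrow> (SUP k\<in>{1..}. a k / real k)"
proof -
  define L where "L = (SUP k\<in>{1..}. a k / real k)"
  have bdd: "bdd_above ((\<lambda>k. a k / real k) ` {1..})"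
    using ub by (intro bdd_aboveI[of _ B]) (auto simp: divide_le_eq mult.commute)
  have le: "a k / real k \<le> L" if "k \<ge> 1" for k
    unfolding L_def using that by (intro cSUP_upper bdd) auto
  have B0: "B \<ge> 0" using ub[rule_format, of 1] nn by (metis mult_1 of_nat_1 order_trans)
  show ?thesis unfolding L_def[symmetric]
  proof (rule LIMSEQ_I)
    fix r :: real assume r: "r > 0"
    have "L - r/2 < L" using r by simp
    then obtain m where m: "m \<in> {1..}" "L - r/2 < a m / real m"
      unfolding L_def using bdd by (subst (asm) less_cSUP_iff) auto
    have mpos: "real m > 0" using m by auto
    obtain N0 :: nat where N0: "real N0 > 2 * real m * B / r" using reals_Archimedean2 by blast
    show "\<exists>no. \<forall>n\<ge>no. norm (a n / real n - L) < r"
    proof (intro exI[of _ "max (max m N0) 1"] allI impI)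
      fix n assume n: "max (max m N0) 1 \<le> n"
      then have npos: "real n > 0" and nm: "m \<le> n" and nN: "N0 \<le> n" by auto
      define q where "q = n div m"
      have qm: "real q * real m > real n - real m"
      proof -
        have "n = q * m + n mod m" by (simp add: q_def)
        moreover have "n mod m < m" using m by auto
        ultimately have "real n < real q * real m + real m"
          by (metis of_nat_add of_nat_less_iff of_nat_mult add_less_mono1 add_less_cancel_left)
        then show ?thesis by simp
      qed
      have "real q * a m \<le> a (q * m)" by (rule superadd_mult[OF sa]) (use nn in auto)
      also have "a (q * m) \<le> a (q * m) + a (n mod m)" using nn by simp
      also have "\<dots> \<le> a n" using sa by (metis div_mult_mod_eq q_def)
      finally have qa: "real q * a m \<le> a n" .
      have "a m / real m - real m * B / real n \<le> a n / real n"
      proof -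
        define X where "X = a m / real m"
        have am: "0 \<le> X" using nn mpos by (simp add: X_def)
        have mX: "real m * X = a m" using mpos by (simp add: X_def)
        have "(real n - real m) * X \<le> real q * real m * X"
          using qm am by (intro mult_right_mono) auto
        also have "\<dots> = real q * a m" using mX by (simp add: mult.assoc)
        finally have h1: "(real n - real m) * X \<le> a n" using qa by linarith
        have h2: "real m * X \<le> real m * B" using ub[rule_format, of m] mX by simp
        have "real n * X = (real n - real m) * X + real m * X" by (simp add: algebra_simps)
        then have "real n * X - real m * B \<le> a n" using h1 h2 by linarith
        then have "(real n * X - real m * B) / real n \<le> a n / real n" using npos by (simp add: divide_right_mono)
        then show ?thesis using npos by (simp add: X_def diff_divide_distrib)
      qed
      moreover have "real m * B / real n < r / 2"
      proof -
        have "real N0 \<le> real n" using nN by simp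
        then have "2 * real m * B / r < real n" using N0 by linarith
        then show ?thesis using r npos by (simp add: field_simps)
      qed
      moreover have "a n / real n \<le> L" using n by (intro le) auto
      ultimately have lo: "L - r < a n / real n" and hi: "a n / real n \<le> L" using m(2) by linarith+
      show "norm (a n / real n - L) < r" unfolding real_norm_def abs_less_iff using lo hi r by linarith
    qed
  qed
qed


locale fdnorm2 = fdnorm1 N for N :: "'k::{real_normed_field,heine_borel}^'n \<Rightarrow> real" +
  fixes \<phi>0 :: "'k^'n"
  assumes phi0: "dual_norm N \<phi>0 = 1"
begin

abbreviation cset where "cset n \<equiv> {C. \<forall>\<psi>::nat \<Rightarrow> 'k^'n. (\<Prod>i<n. dual_norm N (\<psi> i)) \<le> C * prod_norm N n \<psi>}"

lemma UBn: "\<exists>C>0. \<forall>n. C^n \<in> cset n" using UB by auto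

lemma cset_pos: "C \<in> cset n \<Longrightarrow> C \<ge> 0"
proof -
  assume "C \<in> cset n"
  then have h: "\<forall>\<psi>::nat\<Rightarrow>'k^'n. (\<Prod>i<n. dual_norm N (\<psi> i)) \<le> C * prod_norm N n \<psi>" by simp
  have "(\<Prod>i<n. dual_norm N ((\<lambda>_. \<phi>0) i)) \<le> C * prod_norm N n (\<lambda>_. \<phi>0)" by (rule h[rule_format])
  then have h1: "1 \<le> C * prod_norm N n (\<lambda>_. \<phi>0)" by (simp add: phi0)
  show "C \<ge> 0"
  proof (rule ccontr)
    assume "\<not> C \<ge> 0"
    then have "C * prod_norm N n (\<lambda>_. \<phi>0) \<le> 0" by (intro mult_nonpos_nonneg) (auto simp: prod_norm_nonneg)
    then show False using h1 by linarith
  qed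
qed

lemma cn_ub: "(\<Prod>i<n. dual_norm N (\<psi> i)) \<le> c_n N n * prod_norm N n \<psi>"
proof -
  obtain C where C: "C > 0" "C^n \<in> cset n" using UBn by blast
  show ?thesis
  proof (cases "prod_norm N n \<psi> > 0")
    case True
    have "(\<Prod>i<n. dual_norm N (\<psi> i)) / prod_norm N n \<psi> \<le> c_n N n"
      unfolding c_n_def
    proof (rule cInf_greatest)
      show "cset n \<noteq> {}" using C by blast
      fix D assume "D \<in> cset n"
      then have "(\<Prod>i<n. dual_norm N (\<psi> i)) \<le> D * prod_norm N n \<psi>" by blast
      then show "(\<Prod>i<n. dual_norm N (\<psi> i)) / prod_norm N n \<psi> \<le> D" using True by (simp add: divide_le_eq)
    qed
    then show ?thesis using True by (simp add: divide_le_eq)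
  next
    case False
    then have z: "prod_norm N n \<psi> = 0" using prod_norm_nonneg[of n \<psi>] by linarith
    have "(\<Prod>i<n. dual_norm N (\<psi> i)) \<le> C^n * prod_norm N n \<psi>" using C by blast
    then show ?thesis by (simp add: z)
  qed
qed

lemma cn_least: "(\<And>\<psi>. (\<Prod>i<n. dual_norm N (\<psi> i)) \<le> C * prod_norm N n \<psi>) \<Longrightarrow> c_n N n \<le> C"
  unfolding c_n_def
proof (rule cInf_lower)
  assume "\<And>\<psi>. (\<Prod>i<n. dual_norm N (\<psi> i)) \<le> C * prod_norm N n \<psi>"
  then show "C \<in> cset n" by blast
  show "bdd_below (cset n)" by (rule bdd_belowI[of _ 0], rule cset_pos)
qed

lemma cn_ge1: "c_n N n \<ge> 1"
proof -
  have "prod_norm N n (\<lambda>_. \<phi>0) \<le> 1"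
    by (rule prod_norm_le) (use prod_pair_le[of _ "\<lambda>_. \<phi>0" n] phi0 in auto)
  moreover have "1 \<le> c_n N n * prod_norm N n (\<lambda>_. \<phi>0)" using cn_ub[where n=n and \<psi>="\<lambda>_. \<phi>0"] by (simp add: phi0)
  moreover have "c_n N n \<ge> 0" by (rule cset_pos) (use cn_ub in blast)
  ultimately have "c_n N n * prod_norm N n (\<lambda>_. \<phi>0) \<le> c_n N n * 1" by (intro mult_left_mono) auto
  then show ?thesis using \<open>1 \<le> c_n N n * prod_norm N n (\<lambda>_. \<phi>0)\<close> by linarith
qed

lemma cn_UB: "\<exists>C>0. \<forall>n. c_n N n \<le> C^n"
  using UBn cn_least by blast

lemma prod_norm_concat:
  "prod_norm N (n+m) (\<lambda>i. if i < n then \<psi> i else \<phi> (i - n)) \<le> prod_norm N n \<psi> * prod_norm N m \<phi>"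
proof (rule prod_norm_le, intro ballI)
  fix x assume x: "x \<in> S"
  have "norm (\<Prod>i<n+m. pair x (if i < n then \<psi> i else \<phi> (i - n)))
      = (\<Prod>i<n+m. norm (pair x (if i < n then \<psi> i else \<phi> (i - n))))" by (simp add: prod_norm)
  also have "\<dots> = (\<Prod>i<n. norm (pair x (\<psi> i))) * (\<Prod>i<m. norm (pair x (\<phi> i)))"
    by (subst prod_lessThan_add) simp
  also have "\<dots> = norm (\<Prod>i<n. pair x (\<psi> i)) * norm (\<Prod>i<m. pair x (\<phi> i))" by (simp add: prod_norm)
  also have "\<dots> \<le> prod_norm N n \<psi> * prod_norm N m \<phi>"
    by (intro mult_mono prod_le_prod_norm x prod_norm_nonneg) auto
  finally show "norm (\<Prod>i<n+m. pair x (if i < n then \<psi> i else \<phi> (i - n))) \<le> prod_norm N n \<psi> * prod_norm N m \<phi>" .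
qed

lemma cn_super: "c_n N n * c_n N m \<le> c_n N (n + m)"
proof -
  define c where "c = c_n N (n + m)"
  have cn1: "c_n N n \<ge> 1" by (rule cn_ge1)
  have key: "(\<Prod>i<n. dual_norm N (\<psi> i)) * (\<Prod>i<m. dual_norm N (\<phi> i)) \<le> c * (prod_norm N n \<psi> * prod_norm N m \<phi>)"
    for \<psi> \<phi>
  proof -
    define chi where "chi i = (if i < n then \<psi> i else \<phi> (i - n))" for i
    have "(\<Prod>i<n. dual_norm N (\<psi> i)) * (\<Prod>i<m. dual_norm N (\<phi> i)) = (\<Prod>i<n+m. dual_norm N (chi i))"
      by (subst prod_lessThan_add) (simp add: chi_def)
    also have "\<dots> \<le> c * prod_norm N (n+m) chi" unfolding c_def by (rule cn_ub)
    also have "\<dots> \<le> c * (prod_norm N n \<psi> * prod_norm N m \<phi>)"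
      unfolding chi_def c_def using cn_ge1[of "n+m"] by (intro mult_left_mono prod_norm_concat) auto
    finally show ?thesis .
  qed
  have "(\<Prod>i<m. dual_norm N (\<phi> i)) \<le> (c / c_n N n) * prod_norm N m \<phi>" for \<phi>
  proof (cases "(\<Prod>i<m. dual_norm N (\<phi> i)) > 0")
    case True
    have "c_n N n \<le> c * prod_norm N m \<phi> / (\<Prod>i<m. dual_norm N (\<phi> i))"
    proof (rule cn_least)
      fix \<psi>
      show "(\<Prod>i<n. dual_norm N (\<psi> i)) \<le> c * prod_norm N m \<phi> / (\<Prod>i<m. dual_norm N (\<phi> i)) * prod_norm N n \<psi>"
        using key[of \<psi> \<phi>] True by (simp add: field_simps)
    qed
    then show ?thesis using True cn1 by (simp add: field_simps)
  next
    case False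
    then have "(\<Prod>i<m. dual_norm N (\<phi> i)) \<le> 0" by simp
    moreover have "c \<ge> 0" using cn_ge1[of "n+m"] by (simp add: c_def)
    moreover have "0 \<le> (c / c_n N n) * prod_norm N m \<phi>"
      using \<open>c \<ge> 0\<close> cn1 by (intro mult_nonneg_nonneg divide_nonneg_nonneg prod_norm_nonneg) auto
    ultimately show ?thesis by linarith
  qed
  then have "c_n N m \<le> c / c_n N n" by (rule cn_least)
  then show ?thesis using cn1 by (simp add: c_def field_simps)
qed

definition Lam :: real where "Lam = (SUP k\<in>{1..}. ln (c_n N k) / real k)"

lemma cX_conv: "(\<lambda>k. ln (c_n N k) / real k) \<longlonglongrightarrow> Lam" and Lam_ge: "k \<ge> 1 \<Longrightarrow> ln (c_n N k) / real k \<le> Lam"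
proof -
  obtain C where C: "C > 0" "\<forall>n. c_n N n \<le> C^n" using cn_UB by blast
  have nn: "\<forall>k. 0 \<le> ln (c_n N k)" using cn_ge1 by simp
  have sa: "\<forall>p q. ln (c_n N p) + ln (c_n N q) \<le> ln (c_n N (p+q))"
  proof (intro allI)
    fix p q
    have "ln (c_n N p) + ln (c_n N q) = ln (c_n N p * c_n N q)"
      using cn_ge1[of p] cn_ge1[of q] by (simp add: ln_mult)
    also have "\<dots> \<le> ln (c_n N (p+q))"
      using cn_ge1[of p] cn_ge1[of q] cn_ge1[of "p+q"] cn_super[of p q] by (subst ln_le_cancel_iff) auto
    finally show "ln (c_n N p) + ln (c_n N q) \<le> ln (c_n N (p+q))" .
  qed
  have ub: "\<forall>k. ln (c_n N k) \<le> real k * ln C"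
  proof
    fix k
    have "ln (c_n N k) \<le> ln (C^k)" using cn_ge1[of k] C by (subst ln_le_cancel_iff) auto
    then show "ln (c_n N k) \<le> real k * ln C" using C by (simp add: ln_realpow)
  qed
  show "(\<lambda>k. ln (c_n N k) / real k) \<longlonglongrightarrow> Lam" unfolding Lam_def by (rule fekete[OF nn sa ub])
  assume "k \<ge> 1"
  then show "ln (c_n N k) / real k \<le> Lam" unfolding Lam_def
    by (intro cSUP_upper) (auto intro!: bdd_aboveI[of _ "ln C"] simp: divide_le_eq ub mult.commute)
qed

lemma cX_eq: "c_X N = exp Lam"
proof -
  have ev: "\<forall>\<^sub>F k in sequentially. exp (ln (c_n N k) / real k) = root k (c_n N k)"
  proof (rule eventually_sequentiallyI[of 1])
    fix k :: nat assume k: "k \<ge> 1"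
    have p: "c_n N k > 0" using cn_ge1[of k] by simp
    show "exp (ln (c_n N k) / real k) = root k (c_n N k)"
      using k p by (simp add: root_powr_inverse powr_def)
  qed
  have "(\<lambda>k. exp (ln (c_n N k) / real k)) \<longlonglongrightarrow> exp Lam" by (intro tendsto_exp cX_conv)
  then have "(\<lambda>k. root k (c_n N k)) \<longlonglongrightarrow> exp Lam" using ev by (rule Lim_transform_eventually)
  then show ?thesis unfolding c_X_def by (rule limI)
qed

end


lemma exp_quad:
  fixes s :: real assumes s: "\<bar>s\<bar> \<le> 1"
  shows "exp s \<le> 1 + s + 2 * s^2"
proof -
  obtain t where t: "\<bar>t\<bar> \<le> \<bar>s\<bar>" "exp s = (\<Sum>m<2. s^m / fact m) + exp t / fact 2 * s^2"
    using Maclaurin_exp_le[of s 2] by blast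
  have "t \<le> 1" using t(1) s by linarith
  then have "exp t \<le> exp 1" by simp
  then have et: "exp t \<le> 3" using exp_le by linarith
  have "exp t / fact 2 * s^2 \<le> 3 / 2 * s^2"
    using et by (intro mult_right_mono divide_right_mono) auto
  moreover have "(\<Sum>m<2. s^m / fact m) = 1 + s" by (simp add: numeral_2_eq_2)
  moreover have "3 / 2 * s^2 \<le> 2 * s^2" by simp
  ultimately show ?thesis using t(2) by linarith
qed

lemma (in prob_space) exp_moment:
  fixes u :: "'a \<Rightarrow> real"
  assumes meas: "u \<in> borel_measurable M" and ub: "\<And>z. z \<in> space M \<Longrightarrow> \<bar>u z\<bar> \<le> B"
    and mean: "expectation u = 0" and t: "t \<ge> 0" "t * B \<le> 1"
  shows "expectation (\<lambda>z. exp (t * u z)) \<le> exp (2 * t^2 * B^2)"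
proof -
  have B0: "B \<ge> 0" using ub not_empty by (meson abs_ge_zero ex_in_conv order_trans)
  have iu: "integrable M u" by (rule integrable_const_bound[of _ B]) (use ub meas in auto)
  have iu2: "integrable M (\<lambda>z. (u z)^2)"
    by (rule integrable_const_bound[of _ "B^2"])
       (use ub meas B0 in \<open>auto intro!: AE_I2 simp: abs_le_square_iff[symmetric]\<close>)
  have ie: "integrable M (\<lambda>z. exp (t * u z))"
  proof (rule integrable_const_bound[of _ "exp (t * B)"])
    show "AE x in M. norm (exp (t * u x)) \<le> exp (t * B)"
      using ub t by (auto intro!: AE_I2 mult_left_mono simp: abs_le_iff)
  qed (use meas in simp)
  have pt: "exp (t * u z) \<le> 1 + t * u z + 2 * t^2 * (u z)^2" if "z \<in> space M" for z
  proof -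
    have "\<bar>t * u z\<bar> \<le> t * B" using ub[OF that] t by (simp add: abs_mult mult_left_mono)
    then have "\<bar>t * u z\<bar> \<le> 1" using t by linarith
    then show ?thesis using exp_quad[of "t * u z"] by (simp add: power_mult_distrib)
  qed
  have "expectation (\<lambda>z. exp (t * u z)) \<le> expectation (\<lambda>z. 1 + t * u z + 2 * t^2 * (u z)^2)"
    by (rule integral_mono[OF ie _ pt]) (use iu iu2 in auto)
  also have "\<dots> = 1 + t * expectation u + 2 * t^2 * expectation (\<lambda>z. (u z)^2)"
    using iu iu2 prob_space by (simp add: integral_add)
  also have "expectation (\<lambda>z. (u z)^2) \<le> B^2"
    by (rule integral_le_const[OF iu2]) (use ub B0 in \<open>auto intro!: AE_I2 simp: abs_le_square_iff[symmetric]\<close>)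
  then have "1 + t * expectation u + 2 * t^2 * expectation (\<lambda>z. (u z)^2) \<le> 1 + 2 * t^2 * B^2"
    using mean by (simp add: mult_left_mono)
  also have "\<dots> \<le> exp (2 * t^2 * B^2)" using exp_ge_add_one_self[of "2 * t^2 * B^2"] by (simp add: add.commute)
  finally show ?thesis .
qed

lemma (in prob_space) greedy:
  fixes h :: "'b \<Rightarrow> 'a \<Rightarrow> real"
  assumes F: "finite F" "F \<noteq> {}" and B: "B > 0" and e: "\<epsilon> > 0"
    and meas: "\<And>y. y \<in> F \<Longrightarrow> h y \<in> borel_measurable M"
    and bnd: "\<And>y z. y \<in> F \<Longrightarrow> z \<in> space M \<Longrightarrow> -B \<le> h y z \<and> h y z \<le> 0"
  shows "\<exists>n>0. \<exists>\<omega>. (\<forall>i<n. \<omega> i \<in> space M) \<and> (\<forall>y\<in>F. (\<Sum>i<n. h y (\<omega> i)) \<le> real n * (expectation (h y) + \<epsilon>))"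
proof -
  define \<mu> where "\<mu> y = expectation (h y)" for y
  have ih: "integrable M (h y)" if "y \<in> F" for y
  proof (rule integrable_const_bound[of _ B])
    show "AE x in M. norm (h y x) \<le> B"
    proof (rule AE_I2)
      fix x assume "x \<in> space M"
      then show "norm (h y x) \<le> B" using bnd[OF that, of x] by (simp add: abs_le_iff)
    qed
  qed (rule meas[OF that])
  have \<mu>b: "-B \<le> \<mu> y" "\<mu> y \<le> 0" if "y \<in> F" for y
    unfolding \<mu>_def using bnd[OF that]
    by (auto intro!: integral_ge_const integral_le_const ih that AE_I2)
  define u where "u y z = h y z - \<mu> y" for y z
  have um: "u y \<in> borel_measurable M" if "y \<in> F" for y
    using meas[OF that] unfolding u_def[abs_def] by (intro borel_measurable_diff) auto
  have ub: "\<bar>u y z\<bar> \<le> B" if "y \<in> F" "z \<in> space M" for y z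
    using bnd[OF that] \<mu>b[OF that(1)] by (auto simp: u_def abs_le_iff)
  have umean: "expectation (u y) = 0" if "y \<in> F" for y
    using ih[OF that] prob_space unfolding u_def[abs_def] by (simp add: \<mu>_def)
  define t where "t = min (1/B) (\<epsilon> / (8 * B^2))"
  have tpos: "t > 0" using B e by (simp add: t_def)
  have tB: "t * B \<le> 1" using B by (simp add: t_def min_def field_simps)
  have tB2: "4 * t * B^2 \<le> \<epsilon> / 2"
  proof -
    have "t \<le> \<epsilon> / (8 * B^2)" by (simp add: t_def)
    then have "4 * B^2 * t \<le> 4 * B^2 * (\<epsilon> / (8 * B^2))" using B by (intro mult_left_mono) auto
    also have "\<dots> = \<epsilon> / 2" using B by (simp add: field_simps)
    finally show ?thesis by (simp add: ac_simps)
  qed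
  define K where "K = exp (4 * t^2 * B^2)"
  have Kpos: "K > 0" by (simp add: K_def)
  have mom: "expectation (\<lambda>z. exp (t * u y z)) \<le> exp (2 * t^2 * B^2)" if "y \<in> F" for y
    by (rule exp_moment[OF um[OF that] ub[OF that] umean[OF that]]) (use tpos tB in auto)
  have iexp: "integrable M (\<lambda>z. exp (t * u y z))" if "y \<in> F" for y
  proof (rule integrable_const_bound[of _ "exp (t * B)"])
    show "AE x in M. norm (exp (t * u y x)) \<le> exp (t * B)"
      using ub[OF that] tpos by (auto intro!: AE_I2 mult_left_mono simp: abs_le_iff)
  qed (use um[OF that] in simp)
  define \<Phi> where "\<Phi> \<omega> k = (\<Sum>y\<in>F. exp (t * (\<Sum>i<k. u y (\<omega> i))))" for \<omega> :: "nat \<Rightarrow> 'a" and k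
  have \<Phi>pos: "\<Phi> \<omega> k > 0" for \<omega> k unfolding \<Phi>_def using F by (intro sum_pos) auto
  have Kgt: "exp (2 * t^2 * B^2) < K"
    unfolding K_def using tpos B by simp
  have step: "\<exists>\<omega>. (\<forall>i<k. \<omega> i \<in> space M) \<and> \<Phi> \<omega> k \<le> real (card F) * K^k" for k
  proof (induction k)
    case 0
    show ?case by (intro exI[of _ "\<lambda>_. undefined"]) (simp add: \<Phi>_def)
  next
    case (Suc k)
    then obtain \<omega> where \<omega>: "\<forall>i<k. \<omega> i \<in> space M" "\<Phi> \<omega> k \<le> real (card F) * K^k" by blast
    define c where "c y = exp (t * (\<Sum>i<k. u y (\<omega> i)))" for y
    define \<Psi> where "\<Psi> z = (\<Sum>y\<in>F. c y * exp (t * u y z))" for z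
    have i\<Psi>: "integrable M \<Psi>" unfolding \<Psi>_def using iexp by auto
    have "expectation \<Psi> = (\<Sum>y\<in>F. c y * expectation (\<lambda>z. exp (t * u y z)))"
      unfolding \<Psi>_def using iexp by (simp add: integral_sum integrable_mult_right)
    also have "\<dots> \<le> (\<Sum>y\<in>F. c y * exp (2 * t^2 * B^2))"
      using mom by (intro sum_mono mult_left_mono) (auto simp: c_def)
    also have "\<dots> = \<Phi> \<omega> k * exp (2 * t^2 * B^2)" by (simp add: \<Phi>_def c_def sum_distrib_right)
    finally have E\<Psi>: "expectation \<Psi> \<le> \<Phi> \<omega> k * exp (2 * t^2 * B^2)" .
    obtain z where z: "z \<in> space M" "\<Psi> z \<le> \<Phi> \<omega> k * K"
    proof (rule ccontr)
      assume "\<not> thesis"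
      then have gt: "\<And>z. z \<in> space M \<Longrightarrow> \<Phi> \<omega> k * K < \<Psi> z" using that by force
      have "\<Phi> \<omega> k * K \<le> expectation \<Psi>"
        by (rule integral_ge_const[OF i\<Psi>]) (use gt in \<open>auto intro!: AE_I2 less_imp_le\<close>)
      moreover have "\<Phi> \<omega> k * exp (2 * t^2 * B^2) < \<Phi> \<omega> k * K"
        using \<Phi>pos Kgt by simp
      ultimately show False using E\<Psi> by linarith
    qed
    define om2 where "om2 = fun_upd \<omega> k z"
    have "\<Phi> om2 (Suc k) = \<Psi> z"
      unfolding \<Phi>_def \<Psi>_def c_def om2_def
      by (intro sum.cong refl) (simp add: distrib_left exp_add)
    also have "\<dots> \<le> \<Phi> \<omega> k * K" by (rule z(2))
    also have "\<dots> \<le> real (card F) * K^k * K" using \<omega>(2) Kpos by (intro mult_right_mono) auto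
    finally have "\<Phi> om2 (Suc k) \<le> real (card F) * K^Suc k" by (simp add: ac_simps)
    moreover have "\<forall>i<Suc k. om2 i \<in> space M" using \<omega>(1) z(1) by (auto simp: om2_def less_Suc_eq)
    ultimately show ?case by blast
  qed
  obtain n :: nat where n: "real n > max 1 (2 * ln (real (card F)) / (t * \<epsilon>))"
    using reals_Archimedean2 by blast
  have npos: "n > 0" using n by simp
  obtain \<omega> where \<omega>: "\<forall>i<n. \<omega> i \<in> space M" "\<Phi> \<omega> n \<le> real (card F) * K^n" using step by blast
  have cF: "real (card F) \<ge> 1" using F by (simp add: Suc_le_eq card_gt_0_iff)
  have "(\<Sum>i<n. h y (\<omega> i)) \<le> real n * (expectation (h y) + \<epsilon>)" if y: "y \<in> F" for y
  proof -
    define Sy where "Sy = (\<Sum>i<n. u y (\<omega> i))"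
    have "exp (t * Sy) \<le> \<Phi> \<omega> n"
      unfolding \<Phi>_def Sy_def using F y by (intro member_le_sum) auto
    also have "\<dots> \<le> real (card F) * K^n" by (rule \<omega>(2))
    finally have "ln (exp (t * Sy)) \<le> ln (real (card F) * K^n)"
      using cF Kpos by (subst ln_le_cancel_iff) auto
    also have "\<dots> = ln (real (card F)) + real n * (4 * t^2 * B^2)"
      using cF Kpos by (simp add: ln_mult ln_realpow K_def)
    finally have "t * Sy \<le> ln (real (card F)) + real n * (4 * t^2 * B^2)" by simp
    then have "Sy \<le> ln (real (card F)) / t + real n * (4 * t * B^2)"
      using tpos by (simp add: field_simps power2_eq_square)
    also have "ln (real (card F)) / t \<le> real n * \<epsilon> / 2"
    proof -
      have "2 * ln (real (card F)) / (t * \<epsilon>) < real n" using n by linarith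
      then show ?thesis using tpos e by (simp add: field_simps)
    qed
    also have "real n * (4 * t * B^2) \<le> real n * (\<epsilon> / 2)" using tB2 by (intro mult_left_mono) auto
    finally have "Sy \<le> real n * \<epsilon>" by (simp add: mult.commute)
    moreover have "(\<Sum>i<n. h y (\<omega> i)) = Sy + real n * \<mu> y"
      by (simp add: Sy_def u_def sum_subtractf)
    ultimately show ?thesis by (simp add: \<mu>_def algebra_simps)
  qed
  then show ?thesis using npos \<omega>(1) by blast
qed


lemma ln_max_lip:
  fixes a b c :: real
  assumes "a \<ge> 0" "b \<ge> 0" "c > 0"
  shows "\<bar>ln (max a c) - ln (max b c)\<bar> \<le> \<bar>a - b\<bar> / c"
proof -
  have key: "ln u - ln v \<le> \<bar>a - b\<bar> / c" if uv: "u = max a c \<and> v = max b c \<or> u = max b c \<and> v = max a c" for u v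
  proof -
    have u: "u \<ge> c" and v: "v \<ge> c" using uv by auto
    have d: "\<bar>u - v\<bar> \<le> \<bar>a - b\<bar>" using uv by (auto simp: max_def)
    have "ln u - ln v = ln (u / v)" using u v assms(3) by (simp add: ln_div)
    also have "\<dots> \<le> u / v - 1" using u v assms(3) by (intro ln_le_minus_one) auto
    also have "\<dots> = (u - v) / v" using v assms(3) by (simp add: field_simps)
    also have "\<dots> \<le> \<bar>a - b\<bar> / c"
    proof (cases "u \<ge> v")
      case True
      have "(u - v) / v \<le> (u - v) / c" using True v assms(3) by (intro divide_left_mono) auto
      also have "\<dots> \<le> \<bar>a - b\<bar> / c" using d assms(3) by (intro divide_right_mono) auto
      finally show ?thesis .
    next
      case False
      then have "(u - v) / v \<le> 0" using v assms(3) by (simp add: divide_nonpos_pos)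
      also have "0 \<le> \<bar>a - b\<bar> / c" using assms(3) by simp
      finally show ?thesis .
    qed
    finally show ?thesis .
  qed
  show ?thesis using key[of "max a c" "max b c"] key[of "max b c" "max a c"] by (simp add: abs_le_iff)
qed

locale fdmain = fdnorm1 N for N :: "'k::{real_normed_field,heine_borel}^'n \<Rightarrow> real" +
  fixes \<eta> :: "('k^'n) measure"
  assumes pd: "prob_on_dual_sphere N \<eta>" and adm: "admissible N \<eta>"
begin

lemma ps: "prob_space \<eta>" using pd by (simp add: prob_on_dual_sphere_def)
lemma sp: "space \<eta> = dual_sphere N" using pd by (simp add: prob_on_dual_sphere_def)
lemma sts: "sets \<eta> = sets (restrict_space borel (dual_sphere N))" using pd by (simp add: prob_on_dual_sphere_def)
lemma dual1: "\<psi> \<in> space \<eta> \<Longrightarrow> dual_norm N \<psi> = 1" by (simp add: sp dual_sphere_def)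

definition fm :: "nat \<Rightarrow> 'k^'n \<Rightarrow> 'k^'n \<Rightarrow> real" where
  "fm m x \<psi> = ln (max (norm (pair x \<psi>)) (exp (- real m)))"

lemma mx_pos: "0 < max (norm (pair x \<psi>)) (exp (- real m))" by (simp add: less_max_iff_disj)

lemma fm_le0: "x \<in> S \<Longrightarrow> \<psi> \<in> space \<eta> \<Longrightarrow> fm m x \<psi> \<le> 0"
proof -
  assume x: "x \<in> S" and p: "\<psi> \<in> space \<eta>"
  have "norm (pair x \<psi>) \<le> 1" using pair_le_dual[OF x, of \<psi>] dual1[OF p] by simp
  then have "max (norm (pair x \<psi>)) (exp (- real m)) \<le> 1" by simp
  then show ?thesis unfolding fm_def using mx_pos by (subst ln_le_zero_iff) auto
qed

lemma fm_ge: "- real m \<le> fm m x \<psi>"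
proof -
  have "ln (exp (- real m)) \<le> ln (max (norm (pair x \<psi>)) (exp (- real m)))"
    using mx_pos by (subst ln_le_cancel_iff) auto
  then show ?thesis by (simp add: fm_def)
qed

lemma fm_exp: "norm (pair x \<psi>) \<le> exp (fm m x \<psi>)"
proof -
  have "exp (fm m x \<psi>) = max (norm (pair x \<psi>)) (exp (- real m))"
    unfolding fm_def using mx_pos by (subst exp_ln) auto
  then show ?thesis by simp
qed

lemma fm_lip: "\<psi> \<in> space \<eta> \<Longrightarrow> \<bar>fm m x \<psi> - fm m y \<psi>\<bar> \<le> exp (real m) * N (x - y)"
proof -
  assume p: "\<psi> \<in> space \<eta>"
  have "\<bar>fm m x \<psi> - fm m y \<psi>\<bar> \<le> \<bar>norm (pair x \<psi>) - norm (pair y \<psi>)\<bar> / exp (- real m)"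
    unfolding fm_def by (rule ln_max_lip) auto
  also have "\<bar>norm (pair x \<psi>) - norm (pair y \<psi>)\<bar> \<le> norm (pair (x - y) \<psi>)"
    unfolding pair_diff by (rule norm_triangle_ineq3)
  also have "\<dots> \<le> dual_norm N \<psi> * N (x - y)" by (rule pair_le_dual_N)
  also have "\<dots> = N (x - y)" by (simp add: dual1[OF p])
  finally show ?thesis by (simp add: exp_minus field_simps)
qed

lemma pair_meas[measurable]: "(\<lambda>\<psi>. pair x \<psi>) \<in> borel_measurable borel"
  unfolding pair_def by (intro borel_measurable_continuous_onI continuous_intros)

lemma meas_eta: "f \<in> borel_measurable borel \<Longrightarrow> f \<in> borel_measurable \<eta>"
  by (subst measurable_cong_sets[OF sts refl]) (rule measurable_restrict_space1)

lemma fm_meas: "(\<lambda>\<psi>. fm m x \<psi>) \<in> borel_measurable \<eta>"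
  by (rule meas_eta) (unfold fm_def, measurable)

lemma lnmax_meas: "(\<lambda>\<psi>. max (ln (norm (pair x \<psi>))) (- real m)) \<in> borel_measurable \<eta>"
  by (rule meas_eta) measurable

lemma fm_int: "x \<in> S \<Longrightarrow> integrable \<eta> (fm m x)"
proof -
  assume x: "x \<in> S"
  interpret prob_space \<eta> by (rule ps)
  show ?thesis
  proof (rule integrable_const_bound[of _ "real m"])
    show "AE \<psi> in \<eta>. norm (fm m x \<psi>) \<le> real m"
      using fm_le0[OF x] fm_ge by (auto intro!: AE_I2 simp: abs_le_iff) (smt (verit))
  qed (use fm_meas in simp)
qed

definition gm :: "nat \<Rightarrow> 'k^'n \<Rightarrow> real" where
  "gm m x = (\<integral>\<psi>. max (ln (norm (pair x \<psi>))) (- real m) \<partial>\<eta>)"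
definition gf :: "'k^'n \<Rightarrow> real" where
  "gf x = (\<integral>\<psi>. ln (norm (pair x \<psi>)) \<partial>\<eta>)"

lemma gm_fm: "x \<in> S \<Longrightarrow> gm m x = (\<integral>\<psi>. fm m x \<psi> \<partial>\<eta>)"
proof -
  assume x: "x \<in> S"
  have ae: "AE \<psi> in \<eta>. pair x \<psi> \<noteq> 0" using adm x by (simp add: admissible_def)
  show ?thesis unfolding gm_def
  proof (rule integral_cong_AE[OF lnmax_meas fm_meas])
    show "AE \<psi> in \<eta>. max (ln (norm (pair x \<psi>))) (- real m) = fm m x \<psi>"
      using ae
    proof eventually_elim
      case (elim \<psi>)
      then have p: "norm (pair x \<psi>) > 0" by simp
      show ?case
      proof (cases "norm (pair x \<psi>) \<le> exp (- real m)")
        case True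
        then have "ln (norm (pair x \<psi>)) \<le> ln (exp (- real m))" using p by (subst ln_le_cancel_iff) auto
        then have "ln (norm (pair x \<psi>)) \<le> - real m" by simp
        then show ?thesis using True by (simp add: fm_def max_def)
      next
        case False
        then have "ln (exp (- real m)) < ln (norm (pair x \<psi>))" using p by (subst ln_less_cancel_iff) auto
        then have "- real m < ln (norm (pair x \<psi>))" by simp
        then show ?thesis using False by (simp add: fm_def max_def)
      qed
    qed
  qed
qed

lemma gm_lip: "x \<in> S \<Longrightarrow> y \<in> S \<Longrightarrow> \<bar>gm m x - gm m y\<bar> \<le> exp (real m) * N (x - y)"
proof -
  assume x: "x \<in> S" and y: "y \<in> S"
  interpret prob_space \<eta> by (rule ps)
  have "gm m x - gm m y = (\<integral>\<psi>. fm m x \<psi> - fm m y \<psi> \<partial>\<eta>)"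
    using fm_int[OF x] fm_int[OF y] by (simp add: gm_fm x y)
  also have "\<bar>\<dots>\<bar> \<le> (\<integral>\<psi>. \<bar>fm m x \<psi> - fm m y \<psi>\<bar> \<partial>\<eta>)" by (rule integral_abs_bound)
  also have "\<dots> \<le> exp (real m) * N (x - y)"
    by (rule integral_le_const) (use fm_int[OF x] fm_int[OF y] fm_lip in \<open>auto intro!: AE_I2\<close>)
  finally show ?thesis .
qed

lemma gm_cont: "continuous_on S (gm m)"
  unfolding continuous_on_iff
proof (intro ballI allI impI)
  fix x e assume x: "x \<in> S" and e: "(e::real) > 0"
  define L where "L = exp (real m) * (AN + 1)"
  have L: "L > 0" using AN_nonneg by (simp add: L_def add_nonneg_pos)
  show "\<exists>d>0. \<forall>x'\<in>S. dist x' x < d \<longrightarrow> dist (gm m x') (gm m x) < e"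
  proof (intro exI[of _ "e / L"] conjI ballI impI)
    show "e / L > 0" using e L by simp
    fix x' assume x': "x' \<in> S" and d: "dist x' x < e / L"
    have "dist (gm m x') (gm m x) \<le> exp (real m) * N (x' - x)"
      using gm_lip[OF x' x] by (simp add: dist_real_def)
    also have "\<dots> \<le> exp (real m) * ((AN + 1) * dist x' x)"
    proof -
      have "N (x' - x) \<le> AN * norm (x' - x)" by (rule N_le_norm)
      also have "\<dots> \<le> (AN + 1) * dist x' x" by (simp add: dist_norm mult_right_mono)
      finally show ?thesis by (intro mult_left_mono) auto
    qed
    also have "\<dots> = L * dist x' x" by (simp add: L_def)
    also have "\<dots> < L * (e / L)" using d L by (intro mult_strict_left_mono) auto
    also have "\<dots> = e" using L by simp
    finally show "dist (gm m x') (gm m x) < e" .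
  qed
qed

lemma ulim: "uniform_limit S gm gf sequentially"
  using adm unfolding admissible_def gm_def[abs_def] gf_def[abs_def] by blast

lemma gf_cont: "continuous_on S gf"
  by (rule uniform_limit_theorem[OF _ ulim]) (simp_all add: gm_cont)

lemma main_conclusion: "\<exists>x0\<in>S. c_X N \<ge> exp (- gf x0)"
proof -
  interpret P: prob_space \<eta> by (rule ps)
  obtain \<phi>0 where \<phi>0: "\<phi>0 \<in> space \<eta>" using P.not_empty by blast
  interpret F2: fdnorm2 N \<phi>0
    by (rule fdnorm2.intro[OF fdnorm1_axioms], unfold_locales, rule dual1[OF \<phi>0])
  obtain x0 where x0: "x0 \<in> S" "\<forall>y\<in>S. gf y \<le> gf x0"
    using continuous_attains_sup[OF S_compact S_ne gf_cont] by blast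
  have est: "- (gf x0 + \<epsilon>) \<le> F2.Lam" if e: "\<epsilon> > 0" for \<epsilon>
  proof -
    have "\<forall>\<^sub>F m in sequentially. \<forall>x\<in>S. dist (gm m x) (gf x) < \<epsilon> / 3"
    proof -
      have "\<epsilon> / 3 > 0" using e by simp
      then show ?thesis using ulim unfolding uniform_limit_iff by blast
    qed
    then obtain M where M: "\<And>m. m \<ge> M \<Longrightarrow> \<forall>x\<in>S. dist (gm m x) (gf x) < \<epsilon> / 3"
      unfolding eventually_sequentially by blast
    define m where "m = max M 1"
    have m1: "m \<ge> 1" by (simp add: m_def)
    have mclose: "gm m x < gf x + \<epsilon> / 3" if x: "x \<in> S" for x
    proof -
      have "dist (gm m x) (gf x) < \<epsilon> / 3" using M[of m] x by (simp add: m_def)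
      then show ?thesis unfolding dist_real_def by linarith
    qed
    define \<delta> where "\<delta> = \<epsilon> / (3 * exp (real m) * (AN + 1))"
    have AN1: "AN + 1 > 0" using AN_nonneg by simp
    have \<delta>: "\<delta> > 0" using e AN1 by (simp add: \<delta>_def)
    obtain F where F: "F \<subseteq> S" "finite F" "S \<subseteq> (\<Union>y\<in>F. ball y \<delta>)"
      by (rule compactE_image[OF S_compact, of S "\<lambda>y. ball y \<delta>"]) (use \<delta> in auto)
    have Fne: "F \<noteq> {}" using F(3) S_ne by auto
    have mpos: "real m > 0" using m1 by simp
    obtain k \<omega> where k: "k > 0" "\<forall>i<k. \<omega> i \<in> space \<eta>"
      "\<forall>y\<in>F. (\<Sum>i<k. fm m y (\<omega> i)) \<le> real k * ((\<integral>\<psi>. fm m y \<psi> \<partial>\<eta>) + \<epsilon> / 3)"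
      using P.greedy[of F "real m" "\<epsilon> / 3" "\<lambda>y \<psi>. fm m y \<psi>", OF F(2) Fne mpos]
        e fm_meas fm_le0 fm_ge F(1) by (auto simp: subset_iff)
    have bound: "(\<Sum>i<k. fm m x (\<omega> i)) \<le> real k * (gf x0 + \<epsilon>)" if x: "x \<in> S" for x
    proof -
      obtain y where y: "y \<in> F" "dist y x < \<delta>" using F(3) x by auto
      have yS: "y \<in> S" using y F(1) by auto
      have "N (x - y) \<le> AN * norm (x - y)" by (rule N_le_norm)
      also have "\<dots> \<le> (AN + 1) * dist y x" by (simp add: dist_norm norm_minus_commute mult_right_mono)
      also have "\<dots> \<le> (AN + 1) * \<delta>" using y(2) AN1 by (intro mult_left_mono) auto
      finally have "exp (real m) * N (x - y) \<le> exp (real m) * ((AN + 1) * \<delta>)" by simp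
      also have "\<dots> = \<epsilon> / 3"
      proof -
        define E where "E = exp (real m) * (AN + 1)"
        have E: "E > 0" using AN1 by (simp add: E_def)
        have "exp (real m) * ((AN + 1) * \<delta>) = E * (\<epsilon> / (3 * E))"
          by (simp only: E_def \<delta>_def mult.assoc)
        also have "\<dots> = \<epsilon> / 3" using E by simp
        finally show ?thesis .
      qed
      finally have close: "exp (real m) * N (x - y) \<le> \<epsilon> / 3" .
      have "(\<Sum>i<k. fm m x (\<omega> i)) \<le> (\<Sum>i<k. fm m y (\<omega> i) + \<epsilon> / 3)"
      proof (rule sum_mono)
        fix i assume "i \<in> {..<k}"
        then have "\<omega> i \<in> space \<eta>" using k(2) by auto
        then have "\<bar>fm m x (\<omega> i) - fm m y (\<omega> i)\<bar> \<le> exp (real m) * N (x - y)" by (rule fm_lip)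
        then show "fm m x (\<omega> i) \<le> fm m y (\<omega> i) + \<epsilon> / 3" using close by (simp add: abs_le_iff)
      qed
      also have "\<dots> = (\<Sum>i<k. fm m y (\<omega> i)) + real k * (\<epsilon> / 3)" by (simp add: sum.distrib)
      also have "\<dots> \<le> real k * (gm m y + \<epsilon> / 3) + real k * (\<epsilon> / 3)"
        using k(3) y(1) gm_fm[OF yS] by simp
      also have "\<dots> \<le> real k * (gf x0 + \<epsilon>)"
      proof -
        have "gm m y + \<epsilon> / 3 + \<epsilon> / 3 \<le> gf x0 + \<epsilon>" using mclose[OF yS] x0(2) yS by force
        then have "real k * (gm m y + \<epsilon> / 3 + \<epsilon> / 3) \<le> real k * (gf x0 + \<epsilon>)"
          by (intro mult_left_mono) auto
        then show ?thesis by (simp add: distrib_left ac_simps)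
      qed
      finally show ?thesis .
    qed
    have pn: "prod_norm N k \<omega> \<le> exp (real k * (gf x0 + \<epsilon>))"
    proof (rule prod_norm_le, intro ballI)
      fix x assume x: "x \<in> S"
      have "norm (\<Prod>i<k. pair x (\<omega> i)) = (\<Prod>i<k. norm (pair x (\<omega> i)))" by (simp add: prod_norm)
      also have "\<dots> \<le> (\<Prod>i<k. exp (fm m x (\<omega> i)))" by (intro prod_mono conjI fm_exp) auto
      also have "\<dots> = exp (\<Sum>i<k. fm m x (\<omega> i))" by (simp add: exp_sum)
      also have "\<dots> \<le> exp (real k * (gf x0 + \<epsilon>))" using bound[OF x] by simp
      finally show "norm (\<Prod>i<k. pair x (\<omega> i)) \<le> exp (real k * (gf x0 + \<epsilon>))" .
    qed
    have "(\<Prod>i<k. dual_norm N (\<omega> i)) = 1" using k(2) dual1 by simp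
    then have "1 \<le> c_n N k * prod_norm N k \<omega>" using F2.cn_ub[of \<omega> k] by simp
    also have "\<dots> \<le> c_n N k * exp (real k * (gf x0 + \<epsilon>))"
      using pn F2.cn_ge1[of k] by (intro mult_left_mono) auto
    finally have one: "1 \<le> c_n N k * exp (real k * (gf x0 + \<epsilon>))" .
    have cpos: "c_n N k > 0" using F2.cn_ge1[of k] by simp
    have "0 \<le> ln (c_n N k * exp (real k * (gf x0 + \<epsilon>)))" using one by simp
    then have "0 \<le> ln (c_n N k) + real k * (gf x0 + \<epsilon>)" using cpos by (simp add: ln_mult)
    then have "- (gf x0 + \<epsilon>) \<le> ln (c_n N k) / real k" using k(1) by (simp add: field_simps)
    also have "\<dots> \<le> F2.Lam" using k(1) by (intro F2.Lam_ge) auto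
    finally show ?thesis .
  qed
  have "- gf x0 \<le> F2.Lam"
  proof (rule ccontr)
    assume "\<not> - gf x0 \<le> F2.Lam"
    then have h: "(- gf x0 - F2.Lam) / 2 > 0" by simp
    from est[OF h] \<open>\<not> - gf x0 \<le> F2.Lam\<close> show False by (simp add: field_simps)
  qed
  then have "exp (- gf x0) \<le> c_X N" by (simp add: F2.cX_eq)
  then show ?thesis using x0(1) by blast
qed

end


lemma h1d_real:
  fixes \<alpha> \<beta> :: "nat \<Rightarrow> real"
  assumes "finite I"
  shows "\<exists>t::real. -1 \<le> t \<and> t \<le> 1 \<and>
    (1/2)^card I * (\<Prod>i\<in>I. max (norm (\<alpha> i)) (norm (\<beta> i))) \<le> (\<Prod>i\<in>I. norm (\<alpha> i + of_real t * \<beta> i))"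
proof -
  obtain t where t: "-1 \<le> t" "t \<le> 1"
    "(1/2)^card I * (\<Prod>i\<in>I. max (norm (complex_of_real (\<alpha> i))) (norm (complex_of_real (\<beta> i))))
      \<le> (\<Prod>i\<in>I. norm (complex_of_real (\<alpha> i) + of_real t * complex_of_real (\<beta> i)))"
    using oneD_complex[OF assms, of "\<lambda>i. complex_of_real (\<alpha> i)" "\<lambda>i. complex_of_real (\<beta> i)"] by blast
  have "norm (complex_of_real (\<alpha> i) + of_real t * complex_of_real (\<beta> i)) = norm (\<alpha> i + of_real t * \<beta> i)" for i
  proof -
    have e: "complex_of_real (\<alpha> i) + of_real t * complex_of_real (\<beta> i) = complex_of_real (\<alpha> i + t * \<beta> i)" by simp
    show ?thesis by (simp only: e norm_of_real) simp
  qed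
  then show ?thesis using t by (intro exI[of _ t]) simp
qed

lemma h1d_complex:
  fixes \<alpha> \<beta> :: "nat \<Rightarrow> complex"
  assumes "finite I"
  shows "\<exists>t::real. -1 \<le> t \<and> t \<le> 1 \<and>
    (1/2)^card I * (\<Prod>i\<in>I. max (norm (\<alpha> i)) (norm (\<beta> i))) \<le> (\<Prod>i\<in>I. norm (\<alpha> i + of_real t * \<beta> i))"
  by (rule oneD_complex[OF assms])

theorem proposition1p4:
  shows "(\<forall>N \<eta>. is_norm (N::real^'n \<Rightarrow> real) \<and> prob_on_dual_sphere N \<eta> \<and> admissible N \<eta>
          \<longrightarrow> (\<exists>x0\<in>sphere_N N. c_X N \<ge> exp (- (\<integral>\<psi>. ln (norm (pair x0 \<psi>)) \<partial>\<eta>))))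
       \<and> (\<forall>M \<mu>. is_norm (M::complex^'m \<Rightarrow> real) \<and> prob_on_dual_sphere M \<mu> \<and> admissible M \<mu>
          \<longrightarrow> (\<exists>y0\<in>sphere_N M. c_X M \<ge> exp (- (\<integral>\<phi>. ln (norm (pair y0 \<phi>)) \<partial>\<mu>))))"
proof (intro conjI allI impI)
  fix N :: "real^'n \<Rightarrow> real" and \<eta>
  assume h: "is_norm N \<and> prob_on_dual_sphere N \<eta> \<and> admissible N \<eta>"
  interpret fdmain N \<eta>
  proof (intro fdmain.intro fdnorm1.intro fdnorm.intro fdnorm1_axioms.intro fdmain_axioms.intro)
    show "is_norm N" using h by simp
    show "prob_on_dual_sphere N \<eta>" using h by simp
    show "admissible N \<eta>" using h by simp
  qed (rule h1d_real)
  show "\<exists>x0\<in>sphere_N N. c_X N \<ge> exp (- (\<integral>\<psi>. ln (norm (pair x0 \<psi>)) \<partial>\<eta>))"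
    using main_conclusion by (simp add: gf_def)
next
  fix M :: "complex^'m \<Rightarrow> real" and \<mu>
  assume h: "is_norm M \<and> prob_on_dual_sphere M \<mu> \<and> admissible M \<mu>"
  interpret fdmain M \<mu>
  proof (intro fdmain.intro fdnorm1.intro fdnorm.intro fdnorm1_axioms.intro fdmain_axioms.intro)
    show "is_norm M" using h by simp
    show "prob_on_dual_sphere M \<mu>" using h by simp
    show "admissible M \<mu>" using h by simp
  qed (rule h1d_complex)
  show "\<exists>y0\<in>sphere_N M. c_X M \<ge> exp (- (\<integral>\<phi>. ln (norm (pair y0 \<phi>)) \<partial>\<mu>))"
    using main_conclusion by (simp add: gf_def)
qed


end
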